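(* For every integer $n\geq 1$, the Wang shift $\Omega_n$ defined by the set $\mathcal{T}_n$ of $(n+3)^2$ Wang tiles is self-similar. More precisely, there exists an expansive and recognizable 2-dimensional substitution $\omega_n:\Omega_n\to\Omega_n$ which is onto up to a shift, that is, such that $\Omega_n=\overline{\omega_n(\Omega_n)}^{\sigma}:=\{\sigma^{\mathbf{k}}\omega_n(x)\mid \mathbf{k}\in\mathbb{Z}^2,\ x\in\Omega_n\}$.
   Context: Fix an integer $n\ge1$. Let $V_n=\{(v_0,v_1,v_2)\in\mathbb{Z}^3: 0\le v_0\le v_1\le 1,\ v_1\le v_2\le n+1\}$; write $(v_0,v_1,v_2)$ as the word $v_0v_1v_2$ (e.g. $11(n+1)$ is $(1,1,n+1)$). A Wang tile is a quadruple $t=(a,b,c,d)$ of labels with $\mathrm{RIGHT}(t)=a$, $\mathrm{TOP}(t)=b$, $\mathrm{LEFT}(t)=c$, $\mathrm{BOTTOM}(t)=d$. For $t=(a,b,c,d)$ let $\hat t=(b,a,d,c)$ and $\hat S=\{\hat t: t\in S\}$. Define (tiles written as (right, top, left, bottom)): $W_n=\{(11(i+1),11(j+1),11i,11j):1\le i,j\le n\}$; $b_n^i=(00(i+1),111,00i,11n)$, $B_n=\{b_n^i:0\le i\le n-1\}$; $g_n^i=(01(i+1),111,00i,11(n+1))$, $G_n=\{g_n^i:0\le i\le n\}$; $y_n^i=(01(i+1),112,01i,11(n+1))$, $Y_n=\{y_n^i:1\le i\le n\}$; junction tiles $j_n^{k,l,r,s}=((0,k,l),(0,r,s),(0,s,r+n),(0,l,k+n))$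 for $(k,l),(r,s)\in\{(0,0),(0,1),(1,1)\}$; $J_n$ is the set of these 9 tiles minus $j_n^{0,0,1,1}$ and $j_n^{1,1,0,0}$. $\mathcal{T}_n=W_n\cup B_n\cup G_n\cup Y_n\cup\hat B_n\cup\hat G_n\cup\hat Y_n\cup J_n$. A configuration $x:\mathbb{Z}^2\to\mathcal{T}_n$ is valid if $\mathrm{RIGHT}(x(\mathbf m))=\mathrm{LEFT}(x(\mathbf m+\mathbf e_1))$ and $\mathrm{TOP}(x(\mathbf m))=\mathrm{BOTTOM}(x(\mathbf m+\mathbf e_2))$ for all $\mathbf m\in\mathbb{Z}^2$; $\Omega_n$ is the set of valid configurations, with shift action $(\sigma^{\mathbf k}x)_{\mathbf m}=x_{\mathbf m+\mathbf k}$. A 2-dimensional word of size $(n_1,n_2)$ over $\mathcal A$ is a map $[0,n_1-1]\times[0,n_2-1]\to\mathcal A$; $u\odot^i v$ denotes concatenation in direction $\mathbf e_i$ (defined when the other dimension agrees). A 2-dimensional morphism on a factorial language $L$ of 2-dimensional words is a map $\omega$ from $L$ to 2-dimensional words with $\omega(u\odot^i v)=\omega(u)\odot^i\omega(v)$ whenever $u\odot^i v\in L$; it is determined by the images of letters. It extends to configurations $x$ of the subshift $X$ generated by $L$ (a 2-dimensional substitution) by concatenating the images $\omega(x_{\mathbf m})$, with the lower-left cell of $\omega(x_{\mathbf 0})$ at the origin. $\omega$ is expansive if for every letter $a$ and $K\in\mathbb N$ there is $m$ with both dimensions of $\omega^m(a)$ larger than $K$. $\omega$ is recognizable in $X$ if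 every configuration $y$ has at most one pair $(\mathbf k,x)$ with $x\in X$, $y=\sigma^{\mathbf k}\omega(x)$ and $\mathbf 0\le\mathbf k<$ size of $\omega(x_{\mathbf 0})$ coordinatewise. *)

theory Defs
  imports Main
begin

type_synonym label = "int \<times> int \<times> int"
(* a Wang tile (right, top, left, bottom) *)
type_synonym tile = "label \<times> label \<times> label \<times> label"

definition RIGHT :: "tile \<Rightarrow> label" where "RIGHT t = fst t"
definition TOP :: "tile \<Rightarrow> label" where "TOP t = fst (snd t)"
definition LEFT :: "tile \<Rightarrow> label" where "LEFT t = fst (snd (snd t))"
definition BOTTOM :: "tile \<Rightarrow> label" where "BOTTOM t = snd (snd (snd t))"

definition hat :: "tile \<Rightarrow> tile" where
  "hat t = (case t of (a, b, c, d) \<Rightarrow> (b, a, d, c))"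

definition Wset :: "nat \<Rightarrow> tile set" where
  "Wset n = {((1,1,i+1), (1,1,j+1), (1,1,i), (1,1,j)) | i j::int.
              1 \<le> i \<and> i \<le> int n \<and> 1 \<le> j \<and> j \<le> int n}"

definition Bset :: "nat \<Rightarrow> tile set" where
  "Bset n = {((0,0,i+1), (1,1,1), (0,0,i), (1,1,int n)) | i::int. 0 \<le> i \<and> i \<le> int n - 1}"

definition Gset :: "nat \<Rightarrow> tile set" where
  "Gset n = {((0,1,i+1), (1,1,1), (0,0,i), (1,1,int n + 1)) | i::int. 0 \<le> i \<and> i \<le> int n}"

definition Yset :: "nat \<Rightarrow> tile set" where
  "Yset n = {((0,1,i+1), (1,1,2), (0,1,i), (1,1,int n + 1)) | i::int. 1 \<le> i \<and> i \<le> int n}"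

definition junction :: "nat \<Rightarrow> int \<Rightarrow> int \<Rightarrow> int \<Rightarrow> int \<Rightarrow> tile" where
  "junction n k l r s = ((0,k,l), (0,r,s), (0,s,r + int n), (0,l,k + int n))"

definition Jset :: "nat \<Rightarrow> tile set" where
  "Jset n = {junction n k l r s | k l r s.
              (k,l) \<in> {(0,0),(0,1),(1,1)} \<and> (r,s) \<in> {(0,0),(0,1),(1,1)}
              \<and> (k,l,r,s) \<noteq> (0,0,1,1) \<and> (k,l,r,s) \<noteq> (1,1,0,0)}"

definition Tset :: "nat \<Rightarrow> tile set" where
  "Tset n = Wset n \<union> Bset n \<union> Gset n \<union> Yset n
           \<union> hat ` Bset n \<union> hat ` Gset n \<union> hat ` Yset n \<union> Jset n"

definition valid :: "tile set \<Rightarrow> (int \<times> int \<Rightarrow> tile) \<Rightarrow> bool" where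
  "valid T x \<longleftrightarrow> (\<forall>m. x m \<in> T) \<and>
     (\<forall>a b. RIGHT (x (a, b)) = LEFT (x (a + 1, b)) \<and> TOP (x (a, b)) = BOTTOM (x (a, b + 1)))"

definition Omega :: "nat \<Rightarrow> (int \<times> int \<Rightarrow> tile) set" where
  "Omega n = {x. valid (Tset n) x}"

definition shift :: "int \<times> int \<Rightarrow> (int \<times> int \<Rightarrow> 'a) \<Rightarrow> (int \<times> int \<Rightarrow> 'a)" where
  "shift k x = (\<lambda>m. x (fst m + fst k, snd m + snd k))"

(* a 2-dimensional word: its size (n1,n2) and its content on [0,n1-1] x [0,n2-1]
   (values outside the domain are irrelevant) *)
type_synonym 'a word2 = "(nat \<times> nat) \<times> (nat \<times> nat \<Rightarrow> 'a)"

definition wsize :: "'a word2 \<Rightarrow> nat \<times> nat" where "wsize u = fst u"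
definition wcont :: "'a word2 \<Rightarrow> nat \<times> nat \<Rightarrow> 'a" where "wcont u = snd u"

definition letter_word :: "'a \<Rightarrow> 'a word2" where
  "letter_word a = ((1, 1), (\<lambda>_. a))"

(* image of a finite word under the morphism given by letter images omega:
   concatenation of the images (widths read off row 0, heights off column 0) *)
definition subst_word :: "('a \<Rightarrow> 'b word2) \<Rightarrow> 'a word2 \<Rightarrow> 'b word2" where
  "subst_word \<omega> u =
     (let n1 = fst (wsize u); n2 = snd (wsize u); c = wcont u in
      if n1 = 0 \<or> n2 = 0 then ((0, 0), (\<lambda>_. undefined)) else
      let W = (\<lambda>i. fst (wsize (\<omega> (c (i, 0)))));
          H = (\<lambda>j. snd (wsize (\<omega> (c (0, j)))));
          PW = (\<lambda>i. \<Sum>k<i. W k);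
          PH = (\<lambda>j. \<Sum>k<j. H k)
      in ((PW n1, PH n2),
          (\<lambda>(p1, p2). let i = (LEAST i. p1 < PW (Suc i));
                           j = (LEAST j. p2 < PH (Suc j))
                       in wcont (\<omega> (c (i, j))) (p1 - PW i, p2 - PH j))))"

definition blk_pos :: "(int \<Rightarrow> nat) \<Rightarrow> int \<Rightarrow> int" where
  "blk_pos W i = (if 0 \<le> i then int (\<Sum>k\<in>{0..<i}. W k) else - int (\<Sum>k\<in>{i..<0}. W k))"

definition blk_index :: "(int \<Rightarrow> nat) \<Rightarrow> int \<Rightarrow> int" where
  "blk_index W p = (THE i. blk_pos W i \<le> p \<and> p < blk_pos W (i + 1))"

(* extension of the morphism to configurations: the images omega(x_m) are
   concatenated, with the lower-left cell of omega(x_0) at the origin *)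
definition subst_cfg :: "('a \<Rightarrow> 'b word2) \<Rightarrow> (int \<times> int \<Rightarrow> 'a) \<Rightarrow> (int \<times> int \<Rightarrow> 'b)" where
  "subst_cfg \<omega> x = (\<lambda>(p1, p2).
     let W = (\<lambda>i. fst (wsize (\<omega> (x (i, 0)))));
         H = (\<lambda>j. snd (wsize (\<omega> (x (0, j)))));
         i = blk_index W p1;
         j = blk_index H p2
     in wcont (\<omega> (x (i, j))) (nat (p1 - blk_pos W i), nat (p2 - blk_pos H j)))"

(* letter images are compatible on the language of X, so that omega is a
   2-dimensional morphism on that language: horizontally adjacent letters have
   images of equal height, vertically adjacent letters images of equal width *)
definition is_morphism_on :: "(int \<times> int \<Rightarrow> 'a) set \<Rightarrow> ('a \<Rightarrow> 'b word2) \<Rightarrow> bool" where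
  "is_morphism_on X \<omega> \<longleftrightarrow> (\<forall>x\<in>X. \<forall>a b.
      snd (wsize (\<omega> (x (a, b)))) = snd (wsize (\<omega> (x (a + 1, b)))) \<and>
      fst (wsize (\<omega> (x (a, b)))) = fst (wsize (\<omega> (x (a, b + 1)))))"

definition letters :: "(int \<times> int \<Rightarrow> 'a) set \<Rightarrow> 'a set" where
  "letters X = {x m | x m. x \<in> X}"

definition expansive :: "(int \<times> int \<Rightarrow> 'a) set \<Rightarrow> ('a \<Rightarrow> 'a word2) \<Rightarrow> bool" where
  "expansive X \<omega> \<longleftrightarrow> (\<forall>a\<in>letters X. \<forall>K::nat. \<exists>m::nat.
      K < fst (wsize ((subst_word \<omega> ^^ m) (letter_word a))) \<and>
      K < snd (wsize ((subst_word \<omega> ^^ m) (letter_word a))))"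

definition recognizable :: "(int \<times> int \<Rightarrow> 'a) set \<Rightarrow> ('a \<Rightarrow> 'a word2) \<Rightarrow> bool" where
  "recognizable X \<omega> \<longleftrightarrow> (\<forall>y k x k' x'.
      x \<in> X \<and> y = shift k (subst_cfg \<omega> x) \<and>
      0 \<le> fst k \<and> fst k < int (fst (wsize (\<omega> (x (0, 0))))) \<and>
      0 \<le> snd k \<and> snd k < int (snd (wsize (\<omega> (x (0, 0))))) \<and>
      x' \<in> X \<and> y = shift k' (subst_cfg \<omega> x') \<and>
      0 \<le> fst k' \<and> fst k' < int (fst (wsize (\<omega> (x' (0, 0))))) \<and>
      0 \<le> snd k' \<and> snd k' < int (snd (wsize (\<omega> (x' (0, 0)))))
      \<longrightarrow> k = k' \<and> x = x')"

end

theory Submission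
  imports Defs
begin

section \<open>Tile forms\<close>

definition Wt :: "int \<Rightarrow> int \<Rightarrow> tile" where
  "Wt i j = ((1,1,i+1),(1,1,j+1),(1,1,i),(1,1,j))"
definition rk :: "nat \<Rightarrow> int \<Rightarrow> int \<Rightarrow> int \<Rightarrow> tile" where
  "rk n b0 b1 c = ((0,b1,c+1),(1,1,1+b0),(0,b0,c),(1,1,int n+b1))"
definition hk :: "nat \<Rightarrow> int \<Rightarrow> int \<Rightarrow> int \<Rightarrow> tile" where
  "hk n b0 b1 c = ((1,1,1+b0),(0,b1,c+1),(1,1,int n+b1),(0,b0,c))"

definition rkok :: "bool \<Rightarrow> nat \<Rightarrow> int \<Rightarrow> int \<Rightarrow> int \<Rightarrow> bool" where
  "rkok e n b0 b1 c \<longleftrightarrow>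
     (b0 = 0 \<and> b1 = 0 \<and> 0 \<le> c \<and> c \<le> int n - 1) \<or>
     (b0 = 0 \<and> b1 = 1 \<and> 0 \<le> c \<and> c \<le> int n) \<or>
     (b0 = 1 \<and> b1 = 1 \<and> 1 \<le> c \<and> c \<le> int n) \<or>
     (e \<and> b0 = 1 \<and> b1 = 0 \<and> 1 \<le> c \<and> c \<le> int n - 1)"

definition PP :: "(int \<times> int) set" where "PP = {(0,0),(0,1),(1,1)}"

definition jok :: "bool \<Rightarrow> int \<Rightarrow> int \<Rightarrow> int \<Rightarrow> int \<Rightarrow> bool" where
  "jok e k l r s \<longleftrightarrow> (k,l) \<in> PP \<and> (r,s) \<in> PP \<and>
     (e \<or> ((k,l,r,s) \<noteq> (0,0,1,1) \<and> (k,l,r,s) \<noteq> (1,1,0,0)))"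

definition TS :: "bool \<Rightarrow> nat \<Rightarrow> tile set" where
  "TS e n = {Wt i j | i j. 1 \<le> i \<and> i \<le> int n \<and> 1 \<le> j \<and> j \<le> int n}
     \<union> {rk n b0 b1 c | b0 b1 c. rkok e n b0 b1 c}
     \<union> {hk n b0 b1 c | b0 b1 c. rkok e n b0 b1 c}
     \<union> {junction n k l r s | k l r s. jok e k l r s}"

lemma hat_Wt[simp]: "hat (Wt i j) = Wt j i" by (simp add: hat_def Wt_def)
lemma hat_rk[simp]: "hat (rk n b0 b1 c) = hk n b0 b1 c" by (simp add: hat_def rk_def hk_def)
lemma hat_hk[simp]: "hat (hk n b0 b1 c) = rk n b0 b1 c" by (simp add: hat_def rk_def hk_def)
lemma hat_junction[simp]: "hat (junction n k l r s) = junction n r s k l"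
  by (simp add: hat_def junction_def)
lemma hat_hat[simp]: "hat (hat t) = t" by (cases t) (auto simp: hat_def)

lemma TS_W: "1 \<le> i \<Longrightarrow> i \<le> int n \<Longrightarrow> 1 \<le> j \<Longrightarrow> j \<le> int n \<Longrightarrow> Wt i j \<in> TS e n"
  unfolding TS_def by blast
lemma TS_R: "rkok e n b0 b1 c \<Longrightarrow> rk n b0 b1 c \<in> TS e n"
  unfolding TS_def by blast
lemma TS_H: "rkok e n b0 b1 c \<Longrightarrow> hk n b0 b1 c \<in> TS e n"
  unfolding TS_def by blast
lemma TS_J: "jok e k l r s \<Longrightarrow> junction n k l r s \<in> TS e n"
  unfolding TS_def by blast

lemma TS_cases:
  assumes "t \<in> TS e n"
  obtains (W) i j where "t = Wt i j" "1 \<le> i" "i \<le> int n" "1 \<le> j" "j \<le> int n"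
  | (R) b0 b1 c where "t = rk n b0 b1 c" "rkok e n b0 b1 c"
  | (H) b0 b1 c where "t = hk n b0 b1 c" "rkok e n b0 b1 c"
  | (J) k l r s where "t = junction n k l r s" "jok e k l r s"
  using assms unfolding TS_def by blast

lemma jok_sym: "jok e k l r s \<Longrightarrow> jok e r s k l"
  unfolding jok_def by auto

lemma TS_hat: "t \<in> TS e n \<Longrightarrow> hat t \<in> TS e n"
  by (erule TS_cases) (auto intro: TS_W TS_R TS_H TS_J jok_sym)

lemma TS_mono: "t \<in> TS False n \<Longrightarrow> t \<in> TS True n"
  by (erule TS_cases) (auto intro!: TS_W TS_R TS_H TS_J simp: rkok_def jok_def)

lemma Tset_TS: "Tset n = TS False n"
proof
  show "Tset n \<subseteq> TS False n"
  proof
    fix x assume "x \<in> Tset n"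
    then consider "x \<in> Wset n" | "x \<in> Bset n" | "x \<in> Gset n" | "x \<in> Yset n"
      | "x \<in> hat ` Bset n" | "x \<in> hat ` Gset n" | "x \<in> hat ` Yset n" | "x \<in> Jset n"
      unfolding Tset_def by blast
    then show "x \<in> TS False n"
    proof cases
      case 1 then show ?thesis unfolding Wset_def by (auto simp: Wt_def[symmetric] intro!: TS_W)
    next
      case 2 then obtain i where "x = rk n 0 0 i" "0 \<le> i" "i \<le> int n - 1"
        unfolding Bset_def rk_def by auto
      then show ?thesis by (auto intro!: TS_R simp: rkok_def)
    next
      case 3 then obtain i where "x = rk n 0 1 i" "0 \<le> i" "i \<le> int n"
        unfolding Gset_def rk_def by auto
      then show ?thesis by (auto intro!: TS_R simp: rkok_def)
    next
      case 4 then obtain i where "x = rk n 1 1 i" "1 \<le> i" "i \<le> int n"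
        unfolding Yset_def rk_def by auto
      then show ?thesis by (auto intro!: TS_R simp: rkok_def)
    next
      case 5 then obtain i where "x = hat (rk n 0 0 i)" "0 \<le> i" "i \<le> int n - 1"
        unfolding Bset_def rk_def by auto
      then show ?thesis by (auto intro!: TS_H simp: rkok_def)
    next
      case 6 then obtain i where "x = hat (rk n 0 1 i)" "0 \<le> i" "i \<le> int n"
        unfolding Gset_def rk_def by auto
      then show ?thesis by (auto intro!: TS_H simp: rkok_def)
    next
      case 7 then obtain i where "x = hat (rk n 1 1 i)" "1 \<le> i" "i \<le> int n"
        unfolding Yset_def rk_def by auto
      then show ?thesis by (auto intro!: TS_H simp: rkok_def)
    next
      case 8 then obtain k l r s where "x = junction n k l r s" "jok False k l r s"
        unfolding Jset_def jok_def PP_def by blast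
      then show ?thesis by (auto intro!: TS_J)
    qed
  qed
next
  show "TS False n \<subseteq> Tset n"
  proof
    fix x assume "x \<in> TS False n"
    then show "x \<in> Tset n"
    proof (cases rule: TS_cases)
      case (W i j) then show ?thesis unfolding Tset_def Wset_def Wt_def by blast
    next
      case (R b0 b1 c)
      then consider "x \<in> Bset n" | "x \<in> Gset n" | "x \<in> Yset n"
        unfolding rkok_def Bset_def Gset_def Yset_def rk_def by auto
      then show ?thesis unfolding Tset_def by cases blast+
    next
      case (H b0 b1 c)
      then have "hat x \<in> Bset n \<or> hat x \<in> Gset n \<or> hat x \<in> Yset n"
        unfolding rkok_def Bset_def Gset_def Yset_def by (auto simp: rk_def)
      then have "x \<in> hat ` Bset n \<or> x \<in> hat ` Gset n \<or> x \<in> hat ` Yset n"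
        by (metis hat_hat image_eqI)
      then show ?thesis unfolding Tset_def by blast
    next
      case (J k l r s) then show ?thesis unfolding Tset_def Jset_def jok_def PP_def by blast
    qed
  qed
qed

section \<open>Labels\<close>

definition lcls :: "label \<Rightarrow> int" where "lcls l = fst l"
definition lbit :: "label \<Rightarrow> int" where "lbit l = fst (snd l)"
definition lctr :: "label \<Rightarrow> int" where "lctr l = snd (snd l)"

lemma LEFT_simps[simp]:
  "LEFT (Wt i j) = (1,1,i)" "LEFT (rk n b0 b1 c) = (0,b0,c)" "LEFT (hk n b0 b1 c) = (1,1,int n+b1)"
  "LEFT (junction n k l r s) = (0,s,r+int n)"
  by (simp_all add: LEFT_def Wt_def rk_def hk_def junction_def)
lemma RIGHT_simps[simp]:
  "RIGHT (Wt i j) = (1,1,i+1)" "RIGHT (rk n b0 b1 c) = (0,b1,c+1)" "RIGHT (hk n b0 b1 c) = (1,1,1+b0)"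
  "RIGHT (junction n k l r s) = (0,k,l)"
  by (simp_all add: RIGHT_def Wt_def rk_def hk_def junction_def)
lemma TOP_simps[simp]:
  "TOP (Wt i j) = (1,1,j+1)" "TOP (rk n b0 b1 c) = (1,1,1+b0)" "TOP (hk n b0 b1 c) = (0,b1,c+1)"
  "TOP (junction n k l r s) = (0,r,s)"
  by (simp_all add: TOP_def Wt_def rk_def hk_def junction_def)
lemma BOTTOM_simps[simp]:
  "BOTTOM (Wt i j) = (1,1,j)" "BOTTOM (rk n b0 b1 c) = (1,1,int n+b1)" "BOTTOM (hk n b0 b1 c) = (0,b0,c)"
  "BOTTOM (junction n k l r s) = (0,l,k+int n)"
  by (simp_all add: BOTTOM_def Wt_def rk_def hk_def junction_def)

lemma hat_sides[simp]: "LEFT (hat t) = BOTTOM t" "RIGHT (hat t) = TOP t"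
  "TOP (hat t) = RIGHT t" "BOTTOM (hat t) = LEFT t"
  by (cases t; auto simp: hat_def LEFT_def RIGHT_def TOP_def BOTTOM_def)+

lemma TS_cls:
  assumes "t \<in> TS e n"
  shows "lcls (LEFT t) = lcls (RIGHT t)" "lcls (TOP t) = lcls (BOTTOM t)"
    "lcls (LEFT t) = 0 \<or> lcls (LEFT t) = 1" "lcls (BOTTOM t) = 0 \<or> lcls (BOTTOM t) = 1"
  using assms by (cases rule: TS_cases; simp add: lcls_def)+

definition trp :: "(int \<times> int \<Rightarrow> tile) \<Rightarrow> (int \<times> int \<Rightarrow> tile)" where
  "trp y = (\<lambda>p. hat (y (snd p, fst p)))"

lemma transp_app[simp]: "trp y (a,b) = hat (y (b,a))" by (simp add: trp_def)
lemma transp_transp[simp]: "trp (trp y) = y" by (rule ext) (simp add: trp_def)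

lemma valid_transp: assumes "valid (TS e n) y" shows "valid (TS e n) (trp y)"
  using assms unfolding valid_def by (auto intro: TS_hat)

definition hc :: "(int \<times> int \<Rightarrow> tile) \<Rightarrow> int \<Rightarrow> int" where
  "hc y r = lcls (LEFT (y (0, r)))"
definition vc :: "(int \<times> int \<Rightarrow> tile) \<Rightarrow> int \<Rightarrow> int" where
  "vc y c = lcls (BOTTOM (y (c, 0)))"

lemma vc_transp: "vc y c = hc (trp y) c" by (simp add: vc_def hc_def)
lemma hc_transp: "hc y c = vc (trp y) c" by (simp add: vc_def hc_def)

lemma int_const:
  fixes f :: "int \<Rightarrow> 'a"
  assumes "\<And>c. f (c + 1) = f c"
  shows "f c = f 0"
proof (induct c rule: int_induct[where k=0])
  case base then show ?case by simp
next
  case (step1 i) then show ?case using assms[of i] by simp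
next
  case (step2 i) then show ?case using assms[of "i - 1"] by simp
qed

locale cfg =
  fixes n :: nat and e :: bool and y :: "int \<times> int \<Rightarrow> tile"
  assumes vy: "valid (TS e n) y" and n1: "1 \<le> n"
begin

lemma inS: "y m \<in> TS e n" using vy unfolding valid_def by blast
lemma vR: "LEFT (y (a + 1, b)) = RIGHT (y (a, b))" using vy unfolding valid_def by metis
lemma vT: "BOTTOM (y (a, b + 1)) = TOP (y (a, b))" using vy unfolding valid_def by metis

lemma transp_cfg: "cfg n e (trp y)"
  using valid_transp[OF vy] n1 by unfold_locales

lemma hc_const: "lcls (LEFT (y (c, r))) = hc y r"
proof -
  have "(\<lambda>c. lcls (LEFT (y (c, r)))) c = (\<lambda>c. lcls (LEFT (y (c, r)))) 0"
  proof (rule int_const)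
    fix c
    show "lcls (LEFT (y (c + 1, r))) = lcls (LEFT (y (c, r)))"
      using vR[of c r] TS_cls(1)[OF inS[of "(c,r)"]] by simp
  qed
  then show ?thesis by (simp add: hc_def)
qed

lemma hc_const_R: "lcls (RIGHT (y (c, r))) = hc y r"
  using hc_const[of c r] TS_cls(1)[OF inS[of "(c,r)"]] by simp

lemma hc01: "hc y r = 0 \<or> hc y r = 1"
  using hc_const[of 0 r] TS_cls(3)[OF inS[of "(0,r)"]] by simp

end

lemma (in cfg) vc_const: "lcls (BOTTOM (y (c, r))) = vc y c"
proof -
  interpret T: cfg n e "trp y" by (rule transp_cfg)
  show ?thesis using T.hc_const[of r c] by (simp add: vc_transp)
qed

lemma (in cfg) vc_const_T: "lcls (TOP (y (c, r))) = vc y c"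
proof -
  interpret T: cfg n e "trp y" by (rule transp_cfg)
  show ?thesis using T.hc_const_R[of r c] by (simp add: vc_transp)
qed

lemma (in cfg) vc01: "vc y c = 0 \<or> vc y c = 1"
proof -
  interpret T: cfg n e "trp y" by (rule transp_cfg)
  show ?thesis using T.hc01[of c] by (simp add: vc_transp)
qed

context cfg
begin

lemma cls11:
  assumes "hc y r = 1" "vc y c = 1"
  obtains i j where "y (c,r) = Wt i j" "1 \<le> i" "i \<le> int n" "1 \<le> j" "j \<le> int n"
  using inS[of "(c,r)"] hc_const[of c r] vc_const[of c r] assms
  by (cases rule: TS_cases) (auto simp: lcls_def)

lemma cls01:
  assumes "hc y r = 0" "vc y c = 1"
  obtains b0 b1 cc where "y (c,r) = rk n b0 b1 cc" "rkok e n b0 b1 cc"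
  using inS[of "(c,r)"] hc_const[of c r] vc_const[of c r] assms
  by (cases rule: TS_cases) (auto simp: lcls_def)

lemma cls10:
  assumes "hc y r = 1" "vc y c = 0"
  obtains b0 b1 cc where "y (c,r) = hk n b0 b1 cc" "rkok e n b0 b1 cc"
  using inS[of "(c,r)"] hc_const[of c r] vc_const[of c r] assms
  by (cases rule: TS_cases) (auto simp: lcls_def)

lemma cls00:
  assumes "hc y r = 0" "vc y c = 0"
  obtains k l rr s where "y (c,r) = junction n k l rr s" "jok e k l rr s"
  using inS[of "(c,r)"] hc_const[of c r] vc_const[of c r] assms
  by (cases rule: TS_cases) (auto simp: lcls_def)

lemma row1_tile:
  assumes "hc y r = 1"
  shows "lctr (TOP (y (c,r))) = lctr (BOTTOM (y (c,r))) + 1"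
    "0 \<le> lctr (BOTTOM (y (c,r)))" "lctr (BOTTOM (y (c,r))) \<le> int n"
  using inS[of "(c,r)"] hc_const[of c r] assms
  by (cases rule: TS_cases; auto simp: lcls_def lctr_def rkok_def)+

lemma top_nonneg: "0 \<le> lctr (TOP (y (c,r)))"
  using inS[of "(c,r)"]
  by (cases rule: TS_cases) (auto simp: lctr_def rkok_def jok_def PP_def)

lemma runV:
  assumes "\<And>d. 1 \<le> d \<Longrightarrow> d \<le> int m \<Longrightarrow> hc y (r + d) = 1"
  shows "lctr (TOP (y (c, r + int m))) = lctr (TOP (y (c, r))) + int m"
  using assms
proof (induct m)
  case 0 then show ?case by simp
next
  case (Suc m)
  have h: "hc y (r + int m + 1) = 1" using Suc.prems[of "int m + 1"] by (simp add: add.assoc)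
  have "lctr (TOP (y (c, r + int m + 1))) = lctr (BOTTOM (y (c, r + int m + 1))) + 1"
    by (rule row1_tile(1)[OF h])
  also have "BOTTOM (y (c, r + int m + 1)) = TOP (y (c, r + int m))" by (rule vT)
  finally have "lctr (TOP (y (c, r + int m + 1))) = lctr (TOP (y (c, r + int m))) + 1" .
  then show ?case using Suc by (simp add: algebra_simps)
qed

lemma runV_bound:
  assumes "\<And>d. 1 \<le> d \<Longrightarrow> d \<le> int m \<Longrightarrow> hc y (r + d) = 1"
  shows "int m \<le> int n + 1"
proof (cases m)
  case 0 then show ?thesis by simp
next
  case (Suc k)
  have "lctr (TOP (y (c, r + int k))) = lctr (TOP (y (c, r))) + int k"
    by (rule runV) (use assms Suc in auto)
  moreover have h: "hc y (r + int k + 1) = 1" using assms[of "int k + 1"] Suc by (simp add: add.assoc)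
  have "lctr (BOTTOM (y (c, r + int k + 1))) \<le> int n" by (rule row1_tile(3)[OF h])
  moreover have "BOTTOM (y (c, r + int k + 1)) = TOP (y (c, r + int k))" by (rule vT)
  ultimately show ?thesis using top_nonneg[of c r] Suc by simp
qed

lemma ex_row0_above: "\<exists>d. 1 \<le> d \<and> d \<le> int n + 2 \<and> hc y (r + d) = 0"
proof (rule ccontr)
  assume "\<not> ?thesis"
  then have *: "\<And>d. 1 \<le> d \<Longrightarrow> d \<le> int (n + 2) \<Longrightarrow> hc y (r + d) = 1"
    using hc01 by fastforce
  have "int (n + 2) \<le> int n + 1" by (rule runV_bound[of "n+2" r]) (use * in auto)
  then show False by simp
qed

lemma ex_row0_below: "\<exists>d. 1 \<le> d \<and> d \<le> int n + 2 \<and> hc y (r - d) = 0"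
proof -
  obtain d where "1 \<le> d" "d \<le> int n + 2" "hc y (r - int n - 3 + d) = 0"
    using ex_row0_above[of "r - int n - 3"] by blast
  then show ?thesis by (intro exI[of _ "int n + 3 - d"]) (auto simp: algebra_simps)
qed

end


lemma (in cfg) col1_tile:
  assumes "vc y c = 1"
  shows "lctr (RIGHT (y (c,r))) = lctr (LEFT (y (c,r))) + 1"
    "0 \<le> lctr (LEFT (y (c,r)))" "lctr (LEFT (y (c,r))) \<le> int n"
proof -
  interpret T: cfg n e "trp y" by (rule transp_cfg)
  have h: "hc (trp y) c = 1" using assms by (simp add: vc_transp)
  show "lctr (RIGHT (y (c,r))) = lctr (LEFT (y (c,r))) + 1"
    "0 \<le> lctr (LEFT (y (c,r)))" "lctr (LEFT (y (c,r))) \<le> int n"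
    using T.row1_tile[OF h, of r] by auto
qed

lemma (in cfg) runH:
  assumes "\<And>d. 1 \<le> d \<Longrightarrow> d \<le> int m \<Longrightarrow> vc y (c + d) = 1"
  shows "lctr (RIGHT (y (c + int m, r))) = lctr (RIGHT (y (c, r))) + int m"
proof -
  interpret T: cfg n e "trp y" by (rule transp_cfg)
  show ?thesis using T.runV[of m c r] assms by (simp add: vc_transp)
qed

lemma (in cfg) ex_col0_right: "\<exists>d. 1 \<le> d \<and> d \<le> int n + 2 \<and> vc y (c + d) = 0"
proof -
  interpret T: cfg n e "trp y" by (rule transp_cfg)
  show ?thesis using T.ex_row0_above[of c] by (simp add: vc_transp)
qed

lemma (in cfg) ex_col0_left: "\<exists>d. 1 \<le> d \<and> d \<le> int n + 2 \<and> vc y (c - d) = 0"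
proof -
  interpret T: cfg n e "trp y" by (rule transp_cfg)
  show ?thesis using T.ex_row0_below[of c] by (simp add: vc_transp)
qed

definition nxt :: "(int \<times> int \<Rightarrow> tile) \<Rightarrow> int \<Rightarrow> int" where
  "nxt y r = r + int (LEAST d::nat. 1 \<le> d \<and> hc y (r + int d) = 0)"
definition prv :: "(int \<times> int \<Rightarrow> tile) \<Rightarrow> int \<Rightarrow> int" where
  "prv y r = r - int (LEAST d::nat. 1 \<le> d \<and> hc y (r - int d) = 0)"
definition r0 :: "(int \<times> int \<Rightarrow> tile) \<Rightarrow> int" where
  "r0 y = (if hc y 0 = 0 then 0 else prv y 0)"
definition rp :: "(int \<times> int \<Rightarrow> tile) \<Rightarrow> int \<Rightarrow> int" where
  "rp y j = (if 0 \<le> j then (nxt y ^^ nat j) (r0 y) else (prv y ^^ nat (- j)) (r0 y))"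
definition cpos :: "(int \<times> int \<Rightarrow> tile) \<Rightarrow> int \<Rightarrow> int" where
  "cpos y i = rp (trp y) i"

context cfg
begin

lemma nxt_props: "hc y (nxt y r) = 0" "r < nxt y r" "nxt y r \<le> r + int n + 2"
  "\<And>\<rho>. r < \<rho> \<Longrightarrow> \<rho> < nxt y r \<Longrightarrow> hc y \<rho> = 1"
proof -
  obtain d where d: "1 \<le> d" "d \<le> int n + 2" "hc y (r + d) = 0" using ex_row0_above by blast
  let ?P = "\<lambda>d::nat. 1 \<le> d \<and> hc y (r + int d) = 0"
  have Pd: "?P (nat d)" using d by auto
  have L: "?P (Least ?P)" by (rule LeastI[of ?P, OF Pd])
  have Lle: "Least ?P \<le> nat d" by (rule Least_le[of ?P, OF Pd])
  show "hc y (nxt y r) = 0" "r < nxt y r" using L by (auto simp: nxt_def)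
  show "nxt y r \<le> r + int n + 2" using Lle d by (simp add: nxt_def)
  fix \<rho> assume "r < \<rho>" "\<rho> < nxt y r"
  then have "nat (\<rho> - r) < Least ?P" "1 \<le> nat (\<rho> - r)" by (auto simp: nxt_def)
  then have "\<not> ?P (nat (\<rho> - r))" using not_less_Least[of "nat (\<rho> - r)" ?P] by blast
  then show "hc y \<rho> = 1" using \<open>r < \<rho>\<close> \<open>1 \<le> nat (\<rho> - r)\<close> hc01[of \<rho>] by auto
qed

lemma prv_props: "hc y (prv y r) = 0" "prv y r < r" "r - int n - 2 \<le> prv y r"
  "\<And>\<rho>. prv y r < \<rho> \<Longrightarrow> \<rho> < r \<Longrightarrow> hc y \<rho> = 1"
proof -
  obtain d where d: "1 \<le> d" "d \<le> int n + 2" "hc y (r - d) = 0" using ex_row0_below by blast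
  let ?P = "\<lambda>d::nat. 1 \<le> d \<and> hc y (r - int d) = 0"
  have Pd: "?P (nat d)" using d by auto
  have L: "?P (Least ?P)" by (rule LeastI[of ?P, OF Pd])
  have Lle: "Least ?P \<le> nat d" by (rule Least_le[of ?P, OF Pd])
  show "hc y (prv y r) = 0" "prv y r < r" using L by (auto simp: prv_def)
  show "r - int n - 2 \<le> prv y r" using Lle d by (simp add: prv_def)
  fix \<rho> assume "prv y r < \<rho>" "\<rho> < r"
  then have "nat (r - \<rho>) < Least ?P" "1 \<le> nat (r - \<rho>)" by (auto simp: prv_def)
  then have "\<not> ?P (nat (r - \<rho>))" using not_less_Least[of "nat (r - \<rho>)" ?P] by blast
  then show "hc y \<rho> = 1" using \<open>\<rho> < r\<close> \<open>1 \<le> nat (r - \<rho>)\<close> hc01[of \<rho>] by auto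
qed

lemma nxt_eq:
  assumes "r < r'" "hc y r' = 0" "\<And>\<rho>. r < \<rho> \<Longrightarrow> \<rho> < r' \<Longrightarrow> hc y \<rho> = 1"
  shows "nxt y r = r'"
proof -
  have "\<not> nxt y r < r'" using nxt_props(1,2)[of r] assms(3)[of "nxt y r"] by auto
  moreover have "\<not> r' < nxt y r" using nxt_props(4)[of r r'] assms(1,2) by auto
  ultimately show ?thesis by simp
qed

lemma prv_eq:
  assumes "r' < r" "hc y r' = 0" "\<And>\<rho>. r' < \<rho> \<Longrightarrow> \<rho> < r \<Longrightarrow> hc y \<rho> = 1"
  shows "prv y r = r'"
proof -
  have "\<not> prv y r > r'" using prv_props(1,2)[of r] assms(3)[of "prv y r"] by auto
  moreover have "\<not> r' > prv y r" using prv_props(4)[of r r'] assms(1,2) by auto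
  ultimately show ?thesis by simp
qed

lemma nxt_prv: "hc y r = 0 \<Longrightarrow> nxt y (prv y r) = r"
  by (rule nxt_eq) (use prv_props in auto)

lemma prv_nxt: "hc y r = 0 \<Longrightarrow> prv y (nxt y r) = r"
  by (rule prv_eq) (use nxt_props in auto)

lemma r0_cls: "hc y (r0 y) = 0" using prv_props(1) by (simp add: r0_def)

lemma prv_pow_cls: "hc y ((prv y ^^ k) (r0 y)) = 0"
  by (induct k) (auto simp: r0_cls prv_props(1))

lemma nxt_pow_cls: "hc y ((nxt y ^^ k) (r0 y)) = 0"
  by (induct k) (auto simp: r0_cls nxt_props(1))

lemma rp_cls: "hc y (rp y j) = 0"
  by (simp add: rp_def prv_pow_cls nxt_pow_cls)

lemma rp_succ: "rp y (j + 1) = nxt y (rp y j)"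
proof (cases "0 \<le> j")
  case True
  then have "nat (j + 1) = Suc (nat j)" by simp
  then show ?thesis using True by (simp add: rp_def)
next
  case False
  show ?thesis
  proof (cases "j = -1")
    case True then show ?thesis by (simp add: rp_def nxt_prv r0_cls)
  next
    case False
    with \<open>\<not> 0 \<le> j\<close> have "nat (- j) = Suc (nat (- (j + 1)))" "\<not> 0 \<le> j + 1" by auto
    then have "rp y j = prv y (rp y (j + 1))" using \<open>\<not> 0 \<le> j\<close> by (simp add: rp_def)
    then show ?thesis using nxt_prv[OF rp_cls[of "j+1"]] by simp
  qed
qed

lemma rp_lt: "rp y j < rp y (j + 1)" using nxt_props(2) rp_succ by simp
lemma rp_gap_le: "rp y (j + 1) \<le> rp y j + int n + 2" using nxt_props(3) rp_succ by simp
lemma rp_between: "rp y j < \<rho> \<Longrightarrow> \<rho> < rp y (j + 1) \<Longrightarrow> hc y \<rho> = 1"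
  using nxt_props(4) rp_succ by simp

lemma rp0: "rp y 0 \<le> 0" "0 < rp y 1"
proof -
  show "rp y 0 \<le> 0" using prv_props(2)[of 0] by (simp add: rp_def r0_def)
  show "0 < rp y 1"
  proof (cases "hc y 0 = 0")
    case True then show ?thesis using nxt_props(2)[of 0] rp_succ[of 0] by (simp add: rp_def r0_def)
  next
    case False
    then have r: "rp y 0 = prv y 0" by (simp add: rp_def r0_def)
    show ?thesis
    proof (rule ccontr)
      assume "\<not> 0 < rp y 1"
      then have "rp y 1 < 0" using False rp_cls[of 1] by (cases "rp y 1 = 0") auto
      then show False using prv_props(4)[of 0 "rp y 1"] rp_lt[of 0] rp_cls[of 1] r by simp
    qed
  qed
qed

lemma rp_mono: "j \<le> j' \<Longrightarrow> rp y j \<le> rp y j'"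
proof (induct j' rule: int_ge_induct)
  case base then show ?case by simp
next
  case (step i) then show ?case using rp_lt[of i] by simp
qed

lemma rp_strict: "j < j' \<Longrightarrow> rp y j < rp y j'"
  using rp_mono[of "j+1" j'] rp_lt[of j] by simp

end

lemma rkok_bnd: "rkok e n b0 b1 c \<Longrightarrow> 0 \<le> b0 \<and> b0 \<le> 1 \<and> 0 \<le> b1 \<and> b1 \<le> 1 \<and> 0 \<le> c \<and> c \<le> int n"
  unfolding rkok_def by auto
lemma jok_bnd: "jok e k l r s \<Longrightarrow> 0 \<le> k \<and> k \<le> l \<and> l \<le> 1 \<and> 0 \<le> r \<and> r \<le> s \<and> s \<le> 1"
  unfolding jok_def PP_def by auto

context cfg
begin

lemma vgap_rel:
  assumes "0 \<le> L" "\<And>\<rho>. r < \<rho> \<Longrightarrow> \<rho> \<le> r + L \<Longrightarrow> hc y \<rho> = 1"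
  shows "lctr (BOTTOM (y (c, r + L + 1))) = lctr (TOP (y (c, r))) + L"
proof -
  have "lctr (TOP (y (c, r + int (nat L)))) = lctr (TOP (y (c, r))) + int (nat L)"
    by (rule runV) (use assms in auto)
  then show ?thesis using vT[of c "r + L"] assms(1) by simp
qed

lemma vgap_nxt:
  "lctr (BOTTOM (y (c, nxt y r))) = lctr (TOP (y (c, r))) + (nxt y r - r - 1)"
  using vgap_rel[of "nxt y r - r - 1" r c] nxt_props[of r] by simp

lemma ex_col1: "\<exists>c. vc y c = 1"
proof (rule ccontr)
  assume "\<not> ?thesis"
  then have all0: "\<And>c. vc y c = 0" using vc01 by blast
  obtain r where r: "hc y r = 0" using ex_row0_above[of 0] by blast
  have n_eq: "n = 1"
  proof (rule ccontr)
    assume "n \<noteq> 1" then have n2: "2 \<le> n" using n1 by simp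
    obtain k l rr s where J1: "y (0,r) = junction n k l rr s" "jok e k l rr s"
      using cls00[OF r all0] by blast
    obtain k' l' rr' s' where J2: "y (1,r) = junction n k' l' rr' s'" "jok e k' l' rr' s'"
      using cls00[OF r all0] by blast
    have "LEFT (y (0+1, r)) = RIGHT (y (0, r))" by (rule vR)
    then have "l = rr' + int n" using J1 J2 by simp
    then show False using jok_bnd[OF J1(2)] jok_bnd[OF J2(2)] n2 by linarith
  qed
  have F1: "lbit (TOP (y (c,\<rho>))) = 0 \<and> lbit (BOTTOM (y (c,\<rho>))) = 1" if h: "hc y \<rho> = 0" for c \<rho>
  proof -
    obtain k l rr s where J1: "y (c,\<rho>) = junction n k l rr s" "jok e k l rr s"
      using cls00[OF h all0] by blast
    obtain k' l' rr' s' where J2: "y (c+1,\<rho>) = junction n k' l' rr' s'" "jok e k' l' rr' s'"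
      using cls00[OF h all0] by blast
    obtain k'' l'' rr'' s'' where J3: "y (c-1,\<rho>) = junction n k'' l'' rr'' s''" "jok e k'' l'' rr'' s''"
      using cls00[OF h all0] by blast
    have "LEFT (y (c+1, \<rho>)) = RIGHT (y (c, \<rho>))" by (rule vR)
    then have e1: "l = rr' + 1" using J1 J2 n_eq by simp
    have "LEFT (y (c - 1 + 1, \<rho>)) = RIGHT (y (c - 1, \<rho>))" by (rule vR)
    then have e2: "l'' = rr + 1" using J1 J3 n_eq by simp
    have "rr = 0" "l = 1" using e1 e2 jok_bnd[OF J1(2)] jok_bnd[OF J2(2)] jok_bnd[OF J3(2)] by linarith+
    then show ?thesis using J1 by (simp add: lbit_def)
  qed
  have F2: "lbit (TOP (y (c,\<rho>))) = 0 \<and> lctr (BOTTOM (y (c,\<rho>))) = 0"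
    if h: "hc y \<rho> = 1" and b: "\<And>c. lbit (BOTTOM (y (c,\<rho>))) = 0" for c \<rho>
  proof -
    obtain b0 b1 cc where H1: "y (c,\<rho>) = hk n b0 b1 cc" "rkok e n b0 b1 cc"
      using cls10[OF h all0] by blast
    obtain b0' b1' cc' where H2: "y (c-1,\<rho>) = hk n b0' b1' cc'" "rkok e n b0' b1' cc'"
      using cls10[OF h all0] by blast
    have "LEFT (y (c - 1 + 1, \<rho>)) = RIGHT (y (c - 1, \<rho>))" by (rule vR)
    then have e1: "1 + b1 = 1 + b0'" using H1 H2 n_eq by simp
    have "b0 = 0" "b0' = 0" using b[of c] b[of "c-1"] H1 H2 by (simp_all add: lbit_def)
    then have "b1 = 0" using e1 by simp
    then have "cc = 0" using H1(2) \<open>b0 = 0\<close> n_eq unfolding rkok_def by auto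
    then show ?thesis using H1 \<open>b1 = 0\<close> by (simp add: lbit_def lctr_def)
  qed
  have h1: "hc y (r+1) = 1"
  proof (rule ccontr)
    assume "hc y (r+1) \<noteq> 1" then have "hc y (r+1) = 0" using hc01 by blast
    then show False using F1[of r 0] F1[of "r+1" 0] vT[of 0 r] r by simp
  qed
  have b1: "lbit (BOTTOM (y (c,r+1))) = 0" for c using F1[OF r, of c] vT[of c r] by simp
  have t1: "lbit (TOP (y (c,r+1))) = 0 \<and> lctr (TOP (y (c,r+1))) = 1" for c
    using F2[OF h1 b1, of c] row1_tile(1)[OF h1, of c] by simp
  show False
  proof (cases "hc y (r+2) = 0")
    case True then show ?thesis using F1[OF True, of 0] t1[of 0] vT[of 0 "r+1"] by (simp add: add.assoc)
  next
    case False then have "hc y (r+2) = 1" using hc01[of "r+2"] by auto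
    then have h2: "hc y (r+1+1) = 1" by (metis add.assoc one_add_one)
    have "lbit (BOTTOM (y (c,r+1+1))) = 0" for c using t1[of c] vT[of c "r+1"] by simp
    from F2[OF h2 this, of 0] show ?thesis using t1[of 0] vT[of 0 "r+1"] by simp
  qed
qed

lemma ex_col0: "\<exists>c. vc y c = 0" using ex_col0_right by blast
lemma ex_row0: "\<exists>r. hc y r = 0" using ex_row0_above by blast

end

lemma (in cfg) ex_row1: "\<exists>r. hc y r = 1"
proof -
  interpret T: cfg n e "trp y" by (rule transp_cfg)
  show ?thesis using T.ex_col1 by (simp add: hc_transp)
qed

context cfg
begin

lemma gapv: assumes "hc y r = 0" shows "nxt y r - r - 1 = int n - 1 \<or> nxt y r - r - 1 = int n"
proof -
  obtain c1 where c1: "vc y c1 = 1" using ex_col1 by blast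
  obtain c0 where c0: "vc y c0 = 0" using ex_col0 by blast
  obtain b0 b1 cc where R1: "y (c1, r) = rk n b0 b1 cc" "rkok e n b0 b1 cc"
    using cls01[OF assms c1] by blast
  obtain b0' b1' cc' where R2: "y (c1, nxt y r) = rk n b0' b1' cc'" "rkok e n b0' b1' cc'"
    using cls01[OF nxt_props(1) c1] by blast
  obtain k l rr s where J1: "y (c0, r) = junction n k l rr s" "jok e k l rr s"
    using cls00[OF assms c0] by blast
  obtain k' l' rr' s' where J2: "y (c0, nxt y r) = junction n k' l' rr' s'" "jok e k' l' rr' s'"
    using cls00[OF nxt_props(1) c0] by blast
  have "int n + b1' = 1 + b0 + (nxt y r - r - 1)" using vgap_nxt[of c1 r] R1 R2 by (simp add: lctr_def)
  moreover have "k' + int n = s + (nxt y r - r - 1)" using vgap_nxt[of c0 r] J1 J2 by (simp add: lctr_def)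
  ultimately show ?thesis using rkok_bnd[OF R1(2)] rkok_bnd[OF R2(2)] jok_bnd[OF J1(2)] jok_bnd[OF J2(2)]
    by linarith
qed

lemma gap_rp: "rp y (j+1) - rp y j - 1 = int n - 1 \<or> rp y (j+1) - rp y j - 1 = int n"
  using gapv[OF rp_cls[of j]] rp_succ[of j] by simp

end

lemma (in cfg) gap_cpos: "cpos y (i+1) - cpos y i - 1 = int n - 1 \<or> cpos y (i+1) - cpos y i - 1 = int n"
proof -
  interpret T: cfg n e "trp y" by (rule transp_cfg)
  show ?thesis using T.gap_rp by (simp add: cpos_def)
qed

section \<open>Exclusion of the extra tiles\<close>

context cfg
begin

lemma cls_of_tile:
  "hc y r = lcls (LEFT (y (c,r)))" "vc y c = lcls (BOTTOM (y (c,r)))"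
  using hc_const vc_const by auto

lemma no_J0011: "y (c,r) \<noteq> junction n 0 0 1 1"
proof
  assume J: "y (c,r) = junction n 0 0 1 1"
  have hr: "hc y r = 0" and vcc: "vc y c = 0" using cls_of_tile[where r=r and c=c] J by (auto simp: lcls_def)
  have cols: "vc y (c + d) = 1" if "1 \<le> d" "d \<le> int n" for d
  proof (rule ccontr)
    assume "vc y (c + d) \<noteq> 1"
    let ?P = "\<lambda>d::nat. 1 \<le> d \<and> d \<le> n \<and> vc y (c + int d) = 0"
    have Pd: "?P (nat d)" using that \<open>vc y (c + d) \<noteq> 1\<close> vc01[of "c+d"] by auto
    define d0 where "d0 = Least ?P"
    have P0: "?P d0" unfolding d0_def by (rule LeastI[of ?P, OF Pd])
    have below: "vc y (c + int d') = 1" if "1 \<le> d'" "d' < d0" for d'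
    proof -
      have "\<not> ?P d'" unfolding d0_def using not_less_Least[of d' ?P] that(2)[unfolded d0_def] by blast
      then show ?thesis using that P0 vc01[of "c + int d'"] by auto
    qed
    have "lctr (RIGHT (y (c + int (d0 - 1), r))) = lctr (RIGHT (y (c, r))) + int (d0 - 1)"
    proof (rule runH)
      fix d :: int assume "1 \<le> d" "d \<le> int (d0 - 1)"
      then show "vc y (c + d) = 1" using below[of "nat d"] by simp
    qed
    moreover have "LEFT (y (c + int (d0 - 1) + 1, r)) = RIGHT (y (c + int (d0 - 1), r))" by (rule vR)
    moreover have "c + int (d0 - 1) + 1 = c + int d0" using P0 by auto
    moreover obtain k l rr s where "y (c + int d0, r) = junction n k l rr s" "jok e k l rr s"
      using cls00[OF hr] P0 by blast
    ultimately have "lctr (LEFT (y (c + int d0, r))) = 0 + int (d0 - 1)" using J by (simp add: lctr_def)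
    then have "rr + int n = 0 + int (d0 - 1)" using \<open>y (c + int d0, r) = junction n k l rr s\<close> by (simp add: lctr_def)
    then show False using jok_bnd[OF \<open>jok e k l rr s\<close>] P0 by linarith
  qed
  show False
  proof (cases "hc y (r+1) = 1")
    case True
    obtain b0 b1 cc where H: "y (c,r+1) = hk n b0 b1 cc" "rkok e n b0 b1 cc"
      using cls10[OF True vcc] by blast
    have "BOTTOM (y (c, r+1)) = TOP (y (c,r))" by (rule vT)
    then have b0: "b0 = 1" using H J by simp
    have "lctr (RIGHT (y (c + int n, r+1))) = lctr (RIGHT (y (c, r+1))) + int n"
      by (rule runH) (use cols in auto)
    moreover have "lctr (RIGHT (y (c + int n, r+1))) = lctr (LEFT (y (c + int n, r+1))) + 1"
      "lctr (LEFT (y (c + int n, r+1))) \<le> int n"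
      using col1_tile[OF cols[of "int n"]] n1 by auto
    ultimately show False using H b0 by (simp add: lctr_def)
  next
    case False
    then have h0: "hc y (r+1) = 0" using hc01 by blast
    obtain k l rr s where J2: "y (c,r+1) = junction n k l rr s" "jok e k l rr s"
      using cls00[OF h0 vcc] by blast
    have "BOTTOM (y (c, r+1)) = TOP (y (c,r))" by (rule vT)
    then have e: "l = 1" "k + int n = 1" using J2 J by simp_all
    then have nn: "n = 1" "k = 0" "l = 1" using jok_bnd[OF J2(2)] n1 by linarith+
    have c1: "vc y (c+1) = 1" using cols[of 1] n1 by simp
    obtain b0 b1 cc where R1: "y (c+1,r+1) = rk n b0 b1 cc" "rkok e n b0 b1 cc"
      using cls01[OF h0 c1] by blast
    obtain b0' b1' cc' where R2: "y (c+1,r) = rk n b0' b1' cc'" "rkok e n b0' b1' cc'"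
      using cls01[OF hr c1] by blast
    have "LEFT (y (c+1, r+1)) = RIGHT (y (c,r+1))" by (rule vR)
    moreover have "LEFT (y (c+1, r)) = RIGHT (y (c,r))" by (rule vR)
    moreover have "BOTTOM (y (c+1, r+1)) = TOP (y (c+1,r))" by (rule vT)
    ultimately have "b0 = 0" "cc = 1" "b0' = 0" "int n + b1 = 1 + b0'" using R1 R2 J2 J nn by simp_all
    then show False using R1(2) nn unfolding rkok_def by auto
  qed
qed

lemma no_rk10_chain: "vc y (X - int m) = 0 \<Longrightarrow> y (X, r) \<noteq> rk n 1 0 cc"
proof (induct m arbitrary: X r cc)
  case 0 then show ?case using cls_of_tile(2)[where r=r and c=X] by (auto simp: lcls_def)
next
  case (Suc m)
  show ?case
  proof
    assume R: "y (X, r) = rk n 1 0 cc"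
    have hr: "hc y r = 0" and vX: "vc y X = 1" using cls_of_tile[where r=r and c=X] R by (auto simp: lcls_def)
    define rb where "rb = prv y r"
    have nrb: "nxt y rb = r" and hrb: "hc y rb = 0" using nxt_prv[OF hr] prv_props(1) by (auto simp: rb_def)
    define L where "L = r - rb - 1"
    have L: "L = int n - 1 \<or> L = int n" using gapv[OF hrb] nrb by (simp add: L_def)
    have gr: "lctr (BOTTOM (y (c, r))) = lctr (TOP (y (c, rb))) + L" for c
      using vgap_nxt[of c rb] nrb by (simp add: L_def)
    obtain b0 b1 c2 where R2: "y (X, rb) = rk n b0 b1 c2" "rkok e n b0 b1 c2"
      using cls01[OF hrb vX] by blast
    have "int n + 0 = 1 + b0 + L" using gr[of X] R R2 by (simp add: lctr_def)
    then have Ln: "L = int n - 1" "b0 = 0" using L rkok_bnd[OF R2(2)] by linarith+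
    have lr: "LEFT (y (X - 1 + 1, r)) = RIGHT (y (X - 1, r))" by (rule vR)
    show False
    proof (cases "vc y (X - 1) = 0")
      case True
      obtain k l rr s where J1: "y (X - 1, r) = junction n k l rr s" "jok e k l rr s"
        using cls00[OF hr True] by blast
      obtain k' l' rr' s' where J2: "y (X - 1, rb) = junction n k' l' rr' s'" "jok e k' l' rr' s'"
        using cls00[OF hrb True] by blast
      have "k = 1" using lr R J1 by simp
      moreover have "k + int n = s' + L" using gr[of "X - 1"] J1 J2 by (simp add: lctr_def)
      ultimately show False using jok_bnd[OF J2(2)] Ln by linarith
    next
      case False
      then have v1: "vc y (X - 1) = 1" using vc01 by blast
      obtain b0' b1' c' where R3: "y (X - 1, r) = rk n b0' b1' c'" "rkok e n b0' b1' c'"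
        using cls01[OF hr v1] by blast
      obtain b0'' b1'' c'' where R4: "y (X - 1, rb) = rk n b0'' b1'' c''" "rkok e n b0'' b1'' c''"
        using cls01[OF hrb v1] by blast
      have lr2: "LEFT (y (X - 1 + 1, rb)) = RIGHT (y (X - 1, rb))" by (rule vR)
      have "b1' = 1" using lr R R3 by simp
      moreover have "int n + b1' = 1 + b0'' + L" using gr[of "X - 1"] R3 R4 by (simp add: lctr_def)
      ultimately have "b0'' = 1" using Ln by simp
      moreover have "b1'' = 0" using lr2 R2 R4 Ln by simp
      ultimately have "y (X - 1, rb) = rk n 1 0 c''" using R4 by simp
      moreover have "vc y (X - 1 - int m) = 0" using Suc.prems by (simp add: algebra_simps)
      ultimately show False using Suc.hyps by blast
    qed
  qed
qed

lemma no_rk10: "y (X, r) \<noteq> rk n 1 0 cc"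
proof -
  obtain d where d: "1 \<le> d" "d \<le> int n + 2" "vc y (X - d) = 0" using ex_col0_left by blast
  then show ?thesis using no_rk10_chain[of X "nat d" r cc] by simp
qed

end

lemma (in cfg) no_hk10: "y (X, r) \<noteq> hk n 1 0 cc"
proof -
  interpret T: cfg n e "trp y" by (rule transp_cfg)
  show ?thesis using T.no_rk10[of r X cc] by (metis hat_hat hat_hk transp_app)
qed

lemma (in cfg) no_J1100: "y (c, r) \<noteq> junction n 1 1 0 0"
proof -
  interpret T: cfg n e "trp y" by (rule transp_cfg)
  show ?thesis using T.no_J0011[of r c] by (metis hat_junction transp_app)
qed

lemma (in cfg) in_Tset: "y m \<in> TS False n"
proof -
  obtain c r where m: "m = (c,r)" by fastforce
  show ?thesis using inS[of m]
  proof (cases rule: TS_cases)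
    case (W i j) then show ?thesis by (auto intro: TS_W)
  next
    case (R b0 b1 cc)
    then have "rkok False n b0 b1 cc" using no_rk10[of c r cc] m by (auto simp: rkok_def)
    then show ?thesis using R by (auto intro: TS_R)
  next
    case (H b0 b1 cc)
    then have "rkok False n b0 b1 cc" using no_hk10[of c r cc] m by (auto simp: rkok_def)
    then show ?thesis using H by (auto intro: TS_H)
  next
    case (J k l rr s)
    then have "jok False k l rr s" using no_J0011[of c r] no_J1100[of c r] m by (auto simp: jok_def)
    then show ?thesis using J by (auto intro: TS_J)
  qed
qed

lemma (in cfg) valid_False: "valid (TS False n) y"
  using vy in_Tset unfolding valid_def by blast

section \<open>The substitution\<close>

definition bitf :: "int \<Rightarrow> int \<Rightarrow> int" where "bitf th k = (if th \<le> k then 1 else 0)"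

definition pK :: "label \<Rightarrow> int" where "pK l = (if lcls l = 1 then 1 else 1 - lbit l)"
definition pT :: "label \<Rightarrow> int" where "pT l = (if lcls l = 1 then lctr l - 1 else lctr l)"
definition pL :: "nat \<Rightarrow> label \<Rightarrow> int" where "pL n l = (if lcls l = 1 then int n - 1 else int n)"

definition blk :: "nat \<Rightarrow> int \<Rightarrow> int \<Rightarrow> int \<Rightarrow> int \<Rightarrow> int \<Rightarrow> int \<Rightarrow> tile" where
  "blk n kv tv kh th d1 d2 =
    (if d1 = 0 \<and> d2 = 0 then junction n (bitf th 0) kh (bitf tv 0) kv
     else if d1 = 0 then hk n (bitf tv (d2 - 1)) (bitf tv d2) (kv + d2 - 1)
     else if d2 = 0 then rk n (bitf th (d1 - 1)) (bitf th d1) (kh + d1 - 1)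
     else Wt (bitf tv (d2 - 1) + d1) (bitf th (d1 - 1) + d2))"

definition blockc :: "nat \<Rightarrow> label \<Rightarrow> label \<Rightarrow> int \<Rightarrow> int \<Rightarrow> tile" where
  "blockc n lv lh d1 d2 = blk n (pK lv) (pT lv) (pK lh) (pT lh) d1 d2"

definition omega :: "nat \<Rightarrow> tile \<Rightarrow> tile word2" where
  "omega n t = ((nat (pL n (BOTTOM t)) + 1, nat (pL n (LEFT t)) + 1),
                (\<lambda>(p1, p2). blockc n (LEFT t) (BOTTOM t) (int p1) (int p2)))"

lemma blk_RIGHT: "0 \<le> d1 \<Longrightarrow> 0 \<le> d2 \<Longrightarrow> RIGHT (blk n kv tv kh th d1 d2) =
   (if d2 = 0 then (0, bitf th d1, kh + d1) else (1, 1, 1 + bitf tv (d2 - 1) + d1))"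
  by (auto simp: blk_def)

lemma blk_LEFT0: "0 \<le> d2 \<Longrightarrow> LEFT (blk n kv tv kh th 0 d2) =
   (if d2 = 0 then (0, kv, bitf tv 0 + int n) else (1, 1, int n + bitf tv d2))"
  by (auto simp: blk_def)

lemma blk_TOP: "0 \<le> d1 \<Longrightarrow> 0 \<le> d2 \<Longrightarrow> TOP (blk n kv tv kh th d1 d2) =
   (if d1 = 0 then (0, bitf tv d2, kv + d2) else (1, 1, 1 + bitf th (d1 - 1) + d2))"
  by (auto simp: blk_def)

lemma blk_BOTTOM0: "0 \<le> d1 \<Longrightarrow> BOTTOM (blk n kv tv kh th d1 0) =
   (if d1 = 0 then (0, kh, bitf th 0 + int n) else (1, 1, int n + bitf th d1))"
  by (auto simp: blk_def)

lemma blk_adjH: "0 \<le> d1 \<Longrightarrow> 0 \<le> d2 \<Longrightarrow>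
  RIGHT (blk n kv tv kh th d1 d2) = LEFT (blk n kv tv kh th (d1 + 1) d2)"
  by (auto simp: blk_def)

lemma blk_adjV: "0 \<le> d1 \<Longrightarrow> 0 \<le> d2 \<Longrightarrow>
  TOP (blk n kv tv kh th d1 d2) = BOTTOM (blk n kv tv kh th d1 (d2 + 1))"
  by (auto simp: blk_def)

lemma hat_blk: "hat (blk n kv tv kh th d1 d2) = blk n kh th kv tv d2 d1"
  by (auto simp: blk_def)

definition pathok :: "nat \<Rightarrow> int \<Rightarrow> int \<Rightarrow> int \<Rightarrow> bool" where
  "pathok n k th L \<longleftrightarrow> (k = 0 \<or> k = 1) \<and> (L = int n - 1 \<or> L = int n) \<and> 0 \<le> th \<and> th \<le> L + 1
     \<and> (th = 0 \<longrightarrow> k = 1) \<and> (k + L = int n \<or> k + L = int n + 1) \<and> (k + L = int n + 1 \<longrightarrow> th \<le> L)"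

lemma pathok_hk:
  assumes "pathok n k th L" "1 \<le> d" "d \<le> L"
  shows "rkok False n (bitf th (d - 1)) (bitf th d) (k + d - 1)"
  using assms unfolding pathok_def rkok_def bitf_def by auto

definition tprops :: "nat \<Rightarrow> tile \<Rightarrow> bool" where
  "tprops n t \<longleftrightarrow> pathok n (pK (LEFT t)) (pT (LEFT t)) (pL n (LEFT t))
    \<and> pathok n (pK (BOTTOM t)) (pT (BOTTOM t)) (pL n (BOTTOM t))
    \<and> jok False (bitf (pT (BOTTOM t)) 0) (pK (BOTTOM t)) (bitf (pT (LEFT t)) 0) (pK (LEFT t))
    \<and> (pL n (BOTTOM t) = int n \<longrightarrow> pL n (LEFT t) \<le> pT (LEFT t))
    \<and> (pL n (LEFT t) = int n \<longrightarrow> pL n (BOTTOM t) \<le> pT (BOTTOM t))"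

lemmas pdefs = pK_def pT_def pL_def lcls_def lbit_def lctr_def

lemma tile_props:
  assumes "t \<in> TS False n" "1 \<le> n"
  shows "tprops n t"
  using assms(1)
proof (cases rule: TS_cases)
  case (W i j) then show ?thesis using assms(2)
    unfolding tprops_def pathok_def by (simp add: pdefs jok_def PP_def bitf_def)
next
  case (R b0 b1 c) then show ?thesis using assms(2)
    unfolding tprops_def pathok_def by (simp add: pdefs bitf_def) (auto simp: rkok_def jok_def PP_def)
next
  case (H b0 b1 c) then show ?thesis using assms(2)
    unfolding tprops_def pathok_def by (simp add: pdefs bitf_def) (auto simp: rkok_def jok_def PP_def)
next
  case (J k l r s) then show ?thesis using assms(2)
    unfolding tprops_def pathok_def by (simp add: pdefs bitf_def) (auto simp: jok_def PP_def)
qed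

lemma W_range:
  assumes a: "pathok n kv tv Lv" "pathok n kh th Lh" "(Lh = int n \<longrightarrow> Lv \<le> tv)" "(Lv = int n \<longrightarrow> Lh \<le> th)"
    "0 \<le> d1" "d1 \<le> Lh" "0 \<le> d2" "d2 \<le> Lv" "d1 \<noteq> 0" "d2 \<noteq> 0"
  shows "1 \<le> bitf tv (d2 - 1) + d1 \<and> bitf tv (d2 - 1) + d1 \<le> int n \<and>
        1 \<le> bitf th (d1 - 1) + d2 \<and> bitf th (d1 - 1) + d2 \<le> int n"
proof -
  have b: "0 \<le> bitf a b" "bitf a b \<le> 1" for a b by (auto simp: bitf_def)
  have L: "Lh = int n - 1 \<or> Lh = int n" "Lv = int n - 1 \<or> Lv = int n" using a(1,2) by (auto simp: pathok_def)
  have 1: "bitf tv (d2 - 1) + d1 \<le> int n"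
  proof (cases "Lh = int n")
    case True then have "bitf tv (d2 - 1) = 0" using a(3,8) by (simp add: bitf_def)
    then show ?thesis using a(6) True by simp
  next
    case False then show ?thesis using L a(6) b[of tv "d2 - 1"] by linarith
  qed
  have 2: "bitf th (d1 - 1) + d2 \<le> int n"
  proof (cases "Lv = int n")
    case True then have "bitf th (d1 - 1) = 0" using a(4,6) by (simp add: bitf_def)
    then show ?thesis using a(8) True by simp
  next
    case False then show ?thesis using L a(8) b[of th "d1 - 1"] by linarith
  qed
  show ?thesis using 1 2 a(5,7,9,10) b[of tv "d2 - 1"] b[of th "d1 - 1"] by linarith
qed

lemma blk_in_TS:
  assumes "tprops n t" "1 \<le> n" "0 \<le> d1" "d1 \<le> pL n (BOTTOM t)" "0 \<le> d2" "d2 \<le> pL n (LEFT t)"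
  shows "blockc n (LEFT t) (BOTTOM t) d1 d2 \<in> TS False n"
proof -
  define kv tv Lv kh th Lh where "kv = pK (LEFT t)" "tv = pT (LEFT t)" "Lv = pL n (LEFT t)"
    "kh = pK (BOTTOM t)" "th = pT (BOTTOM t)" "Lh = pL n (BOTTOM t)"
  have P: "pathok n kv tv Lv" "pathok n kh th Lh" "jok False (bitf th 0) kh (bitf tv 0) kv"
    "Lh = int n \<longrightarrow> Lv \<le> tv" "Lv = int n \<longrightarrow> Lh \<le> th"
    using assms(1) unfolding tprops_def kv_tv_Lv_kh_th_Lh_def by auto
  have e: "blockc n (LEFT t) (BOTTOM t) d1 d2 = blk n kv tv kh th d1 d2"
    by (simp add: blockc_def kv_tv_Lv_kh_th_Lh_def)
  show ?thesis unfolding e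
  proof (cases "d1 = 0")
    case True note d1 = True
    show "blk n kv tv kh th d1 d2 \<in> TS False n"
    proof (cases "d2 = 0")
      case True then show ?thesis using d1 P(3) by (simp add: blk_def TS_J)
    next
      case False
      then have "rkok False n (bitf tv (d2 - 1)) (bitf tv d2) (kv + d2 - 1)"
        using pathok_hk[OF P(1)] assms(5,6) kv_tv_Lv_kh_th_Lh_def by auto
      then show ?thesis using d1 False by (simp add: blk_def TS_H)
    qed
  next
    case False note d1 = False
    show "blk n kv tv kh th d1 d2 \<in> TS False n"
    proof (cases "d2 = 0")
      case True
      then have "rkok False n (bitf th (d1 - 1)) (bitf th d1) (kh + d1 - 1)"
        using pathok_hk[OF P(2)] assms(3,4) d1 kv_tv_Lv_kh_th_Lh_def by auto
      then show ?thesis using d1 True by (simp add: blk_def TS_R)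
    next
      case False
      have "1 \<le> bitf tv (d2 - 1) + d1" "bitf tv (d2 - 1) + d1 \<le> int n"
        "1 \<le> bitf th (d1 - 1) + d2" "bitf th (d1 - 1) + d2 \<le> int n"
        using W_range[OF P(1,2,4,5)] assms(3-6) d1 False unfolding kv_tv_Lv_kh_th_Lh_def[symmetric]
        by auto
      then show ?thesis using d1 False by (simp add: blk_def TS_W)
    qed
  qed
qed

lemma tile_HB_all:
  assumes "t \<in> TS True n" "1 \<le> n"
  shows "pL n (RIGHT t) = pL n (LEFT t) \<and>
    bitf (pT (BOTTOM t)) (pL n (BOTTOM t)) = pK (RIGHT t) \<and>
    pK (BOTTOM t) + pL n (BOTTOM t) = bitf (pT (RIGHT t)) 0 + int n \<and>
    (\<forall>d. 1 \<le> d \<longrightarrow> d \<le> pL n (LEFT t) \<longrightarrow>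
        1 + bitf (pT (LEFT t)) (d - 1) + pL n (BOTTOM t) = int n + bitf (pT (RIGHT t)) d)"
  using assms(1)
proof (cases rule: TS_cases)
  case (W i j) then show ?thesis using assms(2) by (auto simp add: pdefs bitf_def)
next
  case (R b0 b1 c) then show ?thesis using assms(2) by (simp add: pdefs bitf_def) (auto simp: rkok_def)
next
  case (H b0 b1 c) then show ?thesis using assms(2) by (simp add: pdefs bitf_def) (auto simp: rkok_def)
next
  case (J k l r s) then show ?thesis using assms(2) by (simp add: pdefs bitf_def) (auto simp: jok_def PP_def)
qed

section \<open>Block positions\<close>

lemma ivl_ins_top: "(a::int) \<le> b \<Longrightarrow> {a..<b+1} = insert b {a..<b}" by auto
lemma ivl_ins_bot: "(i::int) < j \<Longrightarrow> {i..<j} = insert i {i+1..<j}" by auto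

lemma bp_0[simp]: "blk_pos W 0 = 0" by (simp add: blk_pos_def)

lemma bp_succ: "blk_pos W (i + 1) = blk_pos W i + int (W i)"
proof (cases "0 \<le> i")
  case True
  have "(\<Sum>k\<in>{0..<i+1}. W k) = W i + (\<Sum>k\<in>{0..<i}. W k)"
    using True by (simp add: ivl_ins_top)
  then show ?thesis using True by (simp add: blk_pos_def)
next
  case False
  have "(\<Sum>k\<in>{i..<0}. W k) = W i + (\<Sum>k\<in>{i+1..<0}. W k)"
    using False by (simp add: ivl_ins_bot)
  moreover have "blk_pos W (i + 1) = - int (\<Sum>k\<in>{i+1..<0}. W k)"
    using False by (cases "i = -1") (auto simp: blk_pos_def)
  ultimately show ?thesis using False by (simp add: blk_pos_def)
qed

context
  fixes W :: "int \<Rightarrow> nat"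
  assumes Wpos: "\<And>i. 1 \<le> W i"
begin

lemma bp_lt: "blk_pos W i < blk_pos W (i + 1)" using bp_succ[of W i] Wpos[of i] by simp

lemma bp_mono: "i \<le> j \<Longrightarrow> blk_pos W i \<le> blk_pos W j"
proof (induct j rule: int_ge_induct)
  case base then show ?case by simp
next
  case (step k) then show ?case using bp_lt[of k] by simp
qed

lemma bp_strict: "i < j \<Longrightarrow> blk_pos W i < blk_pos W j"
  using bp_mono[of "i+1" j] bp_lt[of i] by simp

lemma bp_cover: "\<exists>i. blk_pos W i \<le> p \<and> p < blk_pos W (i + 1)"
proof (induct p rule: int_induct[where k=0])
  case base then show ?case using bp_lt[of 0] by (intro exI[of _ 0]) simp
next
  case (step1 p)
  then obtain i where i: "blk_pos W i \<le> p" "p < blk_pos W (i + 1)" by blast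
  show ?case
  proof (cases "p + 1 < blk_pos W (i + 1)")
    case True then show ?thesis using i by (intro exI[of _ i]) auto
  next
    case False
    then have "p + 1 = blk_pos W (i + 1)" using i by simp
    then show ?thesis using bp_lt[of "i+1"] by (intro exI[of _ "i+1"]) simp
  qed
next
  case (step2 p)
  then obtain i where i: "blk_pos W i \<le> p" "p < blk_pos W (i + 1)" by blast
  show ?case
  proof (cases "blk_pos W i \<le> p - 1")
    case True then show ?thesis using i by (intro exI[of _ i]) auto
  next
    case False
    then have "p = blk_pos W i" using i by simp
    then show ?thesis using bp_lt[of "i - 1"] by (intro exI[of _ "i - 1"]) simp
  qed
qed

lemma bp_unique:
  assumes "blk_pos W i \<le> p" "p < blk_pos W (i + 1)" "blk_pos W j \<le> p" "p < blk_pos W (j + 1)"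
  shows "i = j"
proof (rule ccontr)
  assume "i \<noteq> j"
  then consider "i < j" | "j < i" by linarith
  then show False
  proof cases
    case 1 then have "blk_pos W (i+1) \<le> blk_pos W j" using bp_mono[of "i+1" j] by simp
    then show False using assms by simp
  next
    case 2 then have "blk_pos W (j+1) \<le> blk_pos W i" using bp_mono[of "j+1" i] by simp
    then show False using assms by simp
  qed
qed

lemma blk_index_eq:
  assumes "blk_pos W i \<le> p" "p < blk_pos W (i + 1)"
  shows "blk_index W p = i"
  unfolding blk_index_def
proof (rule the_equality)
  show "blk_pos W i \<le> p \<and> p < blk_pos W (i + 1)" using assms by simp
  fix j assume "blk_pos W j \<le> p \<and> p < blk_pos W (j + 1)"
  then show "j = i" using bp_unique assms by blast
qed

end

lemma subst_cfg_eval: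
  fixes \<omega> :: "'a \<Rightarrow> 'b word2" and x :: "int \<times> int \<Rightarrow> 'a"
  defines "W \<equiv> (\<lambda>i. fst (wsize (\<omega> (x (i, 0)))))" and "H \<equiv> (\<lambda>j. snd (wsize (\<omega> (x (0, j)))))"
  assumes Wp: "\<And>i. 1 \<le> W i" and Hp: "\<And>j. 1 \<le> H j"
    and "blk_pos W i \<le> p1" "p1 < blk_pos W (i + 1)" "blk_pos H j \<le> p2" "p2 < blk_pos H (j + 1)"
  shows "subst_cfg \<omega> x (p1, p2) = wcont (\<omega> (x (i, j))) (nat (p1 - blk_pos W i), nat (p2 - blk_pos H j))"
proof -
  have "blk_index W p1 = i" using blk_index_eq[of W, OF Wp] assms by blast
  moreover have "blk_index H p2 = j" using blk_index_eq[of H, OF Hp] assms by blast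
  ultimately show ?thesis unfolding subst_cfg_def W_def H_def by (simp add: Let_def)
qed

lemma omega_size: "wsize (omega n t) = (nat (pL n (BOTTOM t)) + 1, nat (pL n (LEFT t)) + 1)"
  by (simp add: omega_def wsize_def)
lemma omega_cont: "wcont (omega n t) (a, b) = blockc n (LEFT t) (BOTTOM t) (int a) (int b)"
  by (simp add: omega_def wcont_def)

lemma pL_nonneg: "1 \<le> n \<Longrightarrow> 0 \<le> pL n l" by (simp add: pL_def)

section \<open>The substitution maps the shift into itself\<close>

locale scfg = cfg n False x for n x
begin

abbreviation "WW \<equiv> (\<lambda>i. fst (wsize (omega n (x (i, 0)))))"
abbreviation "HH \<equiv> (\<lambda>j. snd (wsize (omega n (x (0, j)))))"

lemma WW_pos: "1 \<le> WW i" by (simp add: omega_size)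
lemma HH_pos: "1 \<le> HH j" by (simp add: omega_size)

lemma pL_col: "pL n (BOTTOM (x (i, j))) = pL n (BOTTOM (x (i, 0)))"
  using vc_const[of i j] vc_const[of i 0] by (simp add: pL_def)
lemma pL_row: "pL n (LEFT (x (i, j))) = pL n (LEFT (x (0, j)))"
  using hc_const[of i j] hc_const[of 0 j] by (simp add: pL_def)

lemma WW_eq: "int (WW i) = pL n (BOTTOM (x (i, j))) + 1"
  using pL_col[of i j] pL_nonneg[OF n1] by (simp add: omega_size)
lemma HH_eq: "int (HH j) = pL n (LEFT (x (i, j))) + 1"
  using pL_row[of i j] pL_nonneg[OF n1] by (simp add: omega_size)

lemma cell_eval:
  assumes "0 \<le> d1" "d1 \<le> pL n (BOTTOM (x (i, j)))" "0 \<le> d2" "d2 \<le> pL n (LEFT (x (i, j)))"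
  shows "subst_cfg (omega n) x (blk_pos WW i + d1, blk_pos HH j + d2) =
         blockc n (LEFT (x (i, j))) (BOTTOM (x (i, j))) d1 d2"
proof -
  have "subst_cfg (omega n) x (blk_pos WW i + d1, blk_pos HH j + d2) =
        wcont (omega n (x (i, j))) (nat (blk_pos WW i + d1 - blk_pos WW i), nat (blk_pos HH j + d2 - blk_pos HH j))"
  proof (rule subst_cfg_eval)
    show "1 \<le> WW i" for i by (rule WW_pos)
    show "1 \<le> HH j" for j by (rule HH_pos)
    show "blk_pos WW i \<le> blk_pos WW i + d1" "blk_pos HH j \<le> blk_pos HH j + d2" using assms by auto
    show "blk_pos WW i + d1 < blk_pos WW (i + 1)" using bp_succ[of WW i] WW_eq[of i j] assms by simp
    show "blk_pos HH j + d2 < blk_pos HH (j + 1)" using bp_succ[of HH j] HH_eq[where i=i and j=j] assms by simp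
  qed
  then show ?thesis using assms by (simp add: omega_cont)
qed

lemma cell_exists:
  obtains i j d1 d2 where "p1 = blk_pos WW i + d1" "p2 = blk_pos HH j + d2"
    "0 \<le> d1" "d1 \<le> pL n (BOTTOM (x (i, j)))" "0 \<le> d2" "d2 \<le> pL n (LEFT (x (i, j)))"
proof -
  obtain i where i: "blk_pos WW i \<le> p1" "p1 < blk_pos WW (i + 1)" using bp_cover[of WW] WW_pos by blast
  obtain j where j: "blk_pos HH j \<le> p2" "p2 < blk_pos HH (j + 1)" using bp_cover[of HH] HH_pos by blast
  show ?thesis
    apply (rule that[of i "p1 - blk_pos WW i" j "p2 - blk_pos HH j"])
    using i j bp_succ[of WW i] bp_succ[of HH j] WW_eq[of i j] HH_eq[where i=i and j=j] by auto
qed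

lemma tp: "tprops n (x m)" using tile_props[OF inS n1] .

lemma subst_valid: "valid (TS False n) (subst_cfg (omega n) x)"
  unfolding valid_def
proof (intro conjI allI)
  fix m :: "int \<times> int"
  obtain p1 p2 where m: "m = (p1, p2)" by fastforce
  obtain i j d1 d2 where c: "p1 = blk_pos WW i + d1" "p2 = blk_pos HH j + d2"
    "0 \<le> d1" "d1 \<le> pL n (BOTTOM (x (i, j)))" "0 \<le> d2" "d2 \<le> pL n (LEFT (x (i, j)))"
    by (rule cell_exists)
  show "subst_cfg (omega n) x m \<in> TS False n"
    using cell_eval[OF c(3-6)] blk_in_TS[OF tp n1 c(3-6)] m c by simp
next
  fix p1 p2
  obtain i j d1 d2 where c: "p1 = blk_pos WW i + d1" "p2 = blk_pos HH j + d2"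
    "0 \<le> d1" "d1 \<le> pL n (BOTTOM (x (i, j)))" "0 \<le> d2" "d2 \<le> pL n (LEFT (x (i, j)))"
    by (rule cell_exists)
  let ?t = "x (i, j)"
  have ev: "subst_cfg (omega n) x (p1, p2) = blk n (pK (LEFT ?t)) (pT (LEFT ?t)) (pK (BOTTOM ?t)) (pT (BOTTOM ?t)) d1 d2"
    using cell_eval[OF c(3-6)] c by (simp add: blockc_def)
  have HB: "pL n (RIGHT ?t) = pL n (LEFT ?t) \<and>
    bitf (pT (BOTTOM ?t)) (pL n (BOTTOM ?t)) = pK (RIGHT ?t) \<and>
    pK (BOTTOM ?t) + pL n (BOTTOM ?t) = bitf (pT (RIGHT ?t)) 0 + int n \<and>
    (\<forall>d. 1 \<le> d \<longrightarrow> d \<le> pL n (LEFT ?t) \<longrightarrow>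
        1 + bitf (pT (LEFT ?t)) (d - 1) + pL n (BOTTOM ?t) = int n + bitf (pT (RIGHT ?t)) d)"
    by (rule tile_HB_all[OF TS_mono[OF inS] n1])
  have VB: "pL n (TOP ?t) = pL n (BOTTOM ?t) \<and>
    bitf (pT (LEFT ?t)) (pL n (LEFT ?t)) = pK (TOP ?t) \<and>
    pK (LEFT ?t) + pL n (LEFT ?t) = bitf (pT (TOP ?t)) 0 + int n \<and>
    (\<forall>d. 1 \<le> d \<longrightarrow> d \<le> pL n (BOTTOM ?t) \<longrightarrow>
        1 + bitf (pT (BOTTOM ?t)) (d - 1) + pL n (LEFT ?t) = int n + bitf (pT (TOP ?t)) d)"
    using tile_HB_all[OF TS_mono[OF TS_hat[OF inS]] n1] by simp
  show "RIGHT (subst_cfg (omega n) x (p1, p2)) = LEFT (subst_cfg (omega n) x (p1 + 1, p2))"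
  proof (cases "d1 < pL n (BOTTOM ?t)")
    case True
    have e: "p1 + 1 = blk_pos WW i + (d1 + 1)" using c by simp
    have "subst_cfg (omega n) x (p1 + 1, p2) = blk n (pK (LEFT ?t)) (pT (LEFT ?t)) (pK (BOTTOM ?t)) (pT (BOTTOM ?t)) (d1 + 1) d2"
      unfolding e c(2) using cell_eval[of "d1 + 1" i j d2] c True by (simp add: blockc_def)
    then show ?thesis using ev blk_adjH c by simp
  next
    case False
    then have d1: "d1 = pL n (BOTTOM ?t)" using c by simp
    let ?t' = "x (i + 1, j)"
    have p: "p1 + 1 = blk_pos WW (i + 1) + 0" using bp_succ[of WW i] WW_eq[of i j] c d1 by simp
    have "subst_cfg (omega n) x (p1 + 1, p2) = blk n (pK (LEFT ?t')) (pT (LEFT ?t')) (pK (BOTTOM ?t')) (pT (BOTTOM ?t')) 0 d2"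
      using cell_eval[of 0 "i+1" j d2] c p pL_row[of "i+1" j] pL_row[of i j] pL_nonneg[OF n1]
      by (simp add: blockc_def)
    moreover have "LEFT ?t' = RIGHT ?t" using vR by simp
    ultimately show ?thesis using ev HB c d1 by (auto simp: blk_RIGHT blk_LEFT0)
  qed
  show "TOP (subst_cfg (omega n) x (p1, p2)) = BOTTOM (subst_cfg (omega n) x (p1, p2 + 1))"
  proof (cases "d2 < pL n (LEFT ?t)")
    case True
    have e: "p2 + 1 = blk_pos HH j + (d2 + 1)" using c by simp
    have "subst_cfg (omega n) x (p1, p2 + 1) = blk n (pK (LEFT ?t)) (pT (LEFT ?t)) (pK (BOTTOM ?t)) (pT (BOTTOM ?t)) d1 (d2 + 1)"
      unfolding e c(1) using cell_eval[of d1 i j "d2 + 1"] c True by (simp add: blockc_def)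
    then show ?thesis using ev blk_adjV c by simp
  next
    case False
    then have d2: "d2 = pL n (LEFT ?t)" using c by simp
    let ?t' = "x (i, j + 1)"
    have p: "p2 + 1 = blk_pos HH (j + 1) + 0" using bp_succ[of HH j] HH_eq[where i=i and j=j] c d2 by simp
    have "subst_cfg (omega n) x (p1, p2 + 1) = blk n (pK (LEFT ?t')) (pT (LEFT ?t')) (pK (BOTTOM ?t')) (pT (BOTTOM ?t')) d1 0"
      using cell_eval[of d1 i "j+1" 0] c p pL_col[of i "j+1"] pL_col[of i j] pL_nonneg[OF n1]
      by (simp add: blockc_def)
    moreover have "BOTTOM ?t' = TOP ?t" using vT by simp
    ultimately show ?thesis using ev VB c d2 by (auto simp: blk_TOP blk_BOTTOM0)
  qed
qed

lemma morph: "snd (wsize (omega n (x (a, b)))) = snd (wsize (omega n (x (a + 1, b)))) \<and>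
      fst (wsize (omega n (x (a, b)))) = fst (wsize (omega n (x (a, b + 1))))"
  using pL_row[of a b] pL_row[of "a+1" b] pL_col[of a b] pL_col[of a "b+1"] by (simp add: omega_size)

end

section \<open>Expansiveness\<close>

lemma sum_ge_first:
  fixes f :: "nat \<Rightarrow> nat"
  assumes "\<And>i. 1 \<le> f i" "0 < A"
  shows "f 0 + (A - 1) \<le> (\<Sum>i<A. f i)"
proof -
  have "(\<Sum>i<A. f i) = f 0 + (\<Sum>i\<in>{1..<A}. f i)"
    using assms(2) by (simp add: sum.atLeast_Suc_lessThan lessThan_atLeast0)
  moreover have "A - 1 \<le> (\<Sum>i\<in>{1..<A}. f i)"
  proof -
    have "(\<Sum>i\<in>{1..<A}. (1::nat)) \<le> (\<Sum>i\<in>{1..<A}. f i)" by (rule sum_mono) (use assms in auto)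
    then show ?thesis by simp
  qed
  ultimately show ?thesis by simp
qed

lemma sw_size:
  assumes "0 < fst (wsize u)" "0 < snd (wsize u)"
  shows "wsize (subst_word \<omega> u) = ((\<Sum>k<fst (wsize u). fst (wsize (\<omega> (wcont u (k, 0))))),
                                       (\<Sum>k<snd (wsize u). snd (wsize (\<omega> (wcont u (0, k))))))"
  using assms unfolding subst_word_def by (simp add: Let_def wsize_def)

lemma sw_origin:
  assumes "0 < fst (wsize u)" "0 < snd (wsize u)" "\<And>a. 0 < fst (wsize (\<omega> a))" "\<And>a. 0 < snd (wsize (\<omega> a))"
  shows "wcont (subst_word \<omega> u) (0, 0) = wcont (\<omega> (wcont u (0, 0))) (0, 0)"
  using assms unfolding subst_word_def by (simp add: Let_def wcont_def Least_eq_0)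

lemma omega_pos: "1 \<le> n \<Longrightarrow> 0 < fst (wsize (omega n a)) \<and> 0 < snd (wsize (omega n a))"
  by (simp add: omega_size)

lemma omega_origin: "wcont (omega n a) (0,0) = junction n (bitf (pT (BOTTOM a)) 0) (pK (BOTTOM a)) (bitf (pT (LEFT a)) 0) (pK (LEFT a))"
  by (simp add: omega_cont blockc_def blk_def)

lemma omega_J_size: "1 \<le> n \<Longrightarrow> wsize (omega n (junction n k l r s)) = (n + 1, n + 1)"
  by (simp add: omega_size pL_def lcls_def)

lemma iter_growth:
  assumes n: "1 \<le> n"
  shows "int m \<le> int (fst (wsize ((subst_word (omega n) ^^ Suc m) (letter_word a)))) \<and>
         int m \<le> int (snd (wsize ((subst_word (omega n) ^^ Suc m) (letter_word a)))) \<and>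
         (\<exists>k l r s. wcont ((subst_word (omega n) ^^ Suc m) (letter_word a)) (0,0) = junction n k l r s) \<and>
         0 < fst (wsize ((subst_word (omega n) ^^ Suc m) (letter_word a))) \<and>
         0 < snd (wsize ((subst_word (omega n) ^^ Suc m) (letter_word a)))"
proof (induct m)
  case 0
  have s: "wsize (letter_word a) = (1,1)" "wcont (letter_word a) (0,0) = a"
    by (simp_all add: letter_word_def wsize_def wcont_def)
  have "wsize (subst_word (omega n) (letter_word a)) = (fst (wsize (omega n a)), snd (wsize (omega n a)))"
    using sw_size[of "letter_word a" "omega n"] s by (simp add: letter_word_def wcont_def)
  moreover have "wcont (subst_word (omega n) (letter_word a)) (0,0) = wcont (omega n a) (0,0)"
    using sw_origin[of "letter_word a" "omega n"] s omega_pos[OF n] by simp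
  ultimately show ?case using omega_pos[OF n] by (auto simp: omega_origin)
next
  case (Suc m)
  define u where "u = (subst_word (omega n) ^^ Suc m) (letter_word a)"
  have IH: "int m \<le> int (fst (wsize u))" "int m \<le> int (snd (wsize u))"
    "\<exists>k l r s. wcont u (0,0) = junction n k l r s" "0 < fst (wsize u)" "0 < snd (wsize u)"
    using Suc unfolding u_def by auto
  obtain k l r s where J: "wcont u (0,0) = junction n k l r s" using IH(3) by blast
  have eq: "(subst_word (omega n) ^^ Suc (Suc m)) (letter_word a) = subst_word (omega n) u"
    by (simp add: u_def)
  have sz: "wsize (subst_word (omega n) u) = ((\<Sum>k<fst (wsize u). fst (wsize (omega n (wcont u (k, 0))))),
                                       (\<Sum>k<snd (wsize u). snd (wsize (omega n (wcont u (0, k))))))"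
    by (rule sw_size[OF IH(4,5)])
  have f1: "fst (wsize (omega n (wcont u (0, 0)))) + (fst (wsize u) - 1) \<le> (\<Sum>k<fst (wsize u). fst (wsize (omega n (wcont u (k, 0)))))"
    using sum_ge_first[of "\<lambda>k. fst (wsize (omega n (wcont u (k, 0))))" "fst (wsize u)"] omega_pos[OF n] IH(4)
    by (simp add: Suc_le_eq)
  have f2: "snd (wsize (omega n (wcont u (0, 0)))) + (snd (wsize u) - 1) \<le> (\<Sum>k<snd (wsize u). snd (wsize (omega n (wcont u (0, k)))))"
    using sum_ge_first[of "\<lambda>k. snd (wsize (omega n (wcont u (0, k))))" "snd (wsize u)"] omega_pos[OF n] IH(5)
    by (simp add: Suc_le_eq)
  have o: "wcont (subst_word (omega n) u) (0,0) = wcont (omega n (wcont u (0,0))) (0,0)"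
    using sw_origin[OF IH(4,5)] omega_pos[OF n] by blast
  have A: "Suc m \<le> fst (wsize (subst_word (omega n) u))" "Suc m \<le> snd (wsize (subst_word (omega n) u))"
    using sz f1 f2 IH(1,2,4,5) J omega_J_size[OF n] n by auto
  have A': "int (Suc m) \<le> int (fst (wsize (subst_word (omega n) u)))"
    "int (Suc m) \<le> int (snd (wsize (subst_word (omega n) u)))" using A by (simp_all only: of_nat_le_iff)
  show ?case unfolding eq using A' A o J by (auto simp: omega_origin)
qed

lemma expansive_omega: "1 \<le> n \<Longrightarrow> expansive X (omega n)"
  unfolding expansive_def
proof (intro ballI allI)
  fix a K assume n: "1 \<le> n"
  have "int (Suc K) \<le> int (fst (wsize ((subst_word (omega n) ^^ Suc (Suc K)) (letter_word a)))) \<and>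
        int (Suc K) \<le> int (snd (wsize ((subst_word (omega n) ^^ Suc (Suc K)) (letter_word a))))"
    using iter_growth[OF n, of "Suc K" a] by blast
  then show "\<exists>m. K < fst (wsize ((subst_word (omega n) ^^ m) (letter_word a))) \<and>
                 K < snd (wsize ((subst_word (omega n) ^^ m) (letter_word a)))"
    by (intro exI[of _ "Suc (Suc K)"]) simp
qed

section \<open>Recognizability\<close>

lemma TS_det:
  assumes "t \<in> TS e n" "t' \<in> TS e n" "LEFT t = LEFT t'" "BOTTOM t = BOTTOM t'"
  shows "t = t'"
  using assms(1)
proof (cases rule: TS_cases)
  case (W i j) note a = this
  show ?thesis using assms(2)
    by (cases rule: TS_cases) (use a assms(3,4) in auto)
next
  case (R b0 b1 c) note a = this
  show ?thesis using assms(2)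
    by (cases rule: TS_cases) (use a assms(3,4) in auto)
next
  case (H b0 b1 c) note a = this
  show ?thesis using assms(2)
    by (cases rule: TS_cases) (use a assms(3,4) in auto)
next
  case (J k l r s) note a = this
  show ?thesis using assms(2)
    by (cases rule: TS_cases) (use a assms(3,4) in auto)
qed

definition lcode :: "nat \<Rightarrow> int \<Rightarrow> int \<Rightarrow> int \<Rightarrow> label" where
  "lcode n k th L = (if L = int n - 1 then (1, 1, 1 + th) else (0, 1 - k, th))"

lemma label_code:
  assumes "t \<in> TS e n"
  shows "LEFT t = lcode n (pK (LEFT t)) (pT (LEFT t)) (pL n (LEFT t))"
    "BOTTOM t = lcode n (pK (BOTTOM t)) (pT (BOTTOM t)) (pL n (BOTTOM t))"
  using assms by (cases rule: TS_cases; simp add: lcode_def pdefs)+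

lemma bitf_inj:
  assumes "0 \<le> a" "a \<le> L + 1" "0 \<le> b" "b \<le> L + 1" "\<And>d. 0 \<le> d \<Longrightarrow> d \<le> L \<Longrightarrow> bitf a d = bitf b d"
  shows "a = b"
proof (rule ccontr)
  assume "a \<noteq> b"
  then consider "a < b" | "b < a" by linarith
  then show False
  proof cases
    case 1 then show False using assms(5)[of a] assms by (simp add: bitf_def)
  next
    case 2 then show False using assms(5)[of b] assms by (simp add: bitf_def)
  qed
qed

lemma label_inj:
  assumes "t \<in> TS False n" "t' \<in> TS False n" "1 \<le> n"
    and "pL n (LEFT t) = pL n (LEFT t')" "pK (LEFT t) = pK (LEFT t')"
    and "\<And>d. 0 \<le> d \<Longrightarrow> d \<le> pL n (LEFT t) \<Longrightarrow> bitf (pT (LEFT t)) d = bitf (pT (LEFT t')) d"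
  shows "LEFT t = LEFT t'"
proof -
  have "pathok n (pK (LEFT t)) (pT (LEFT t)) (pL n (LEFT t))" "pathok n (pK (LEFT t')) (pT (LEFT t')) (pL n (LEFT t'))"
    using tile_props[OF assms(1,3)] tile_props[OF assms(2,3)] by (auto simp: tprops_def)
  then have "pT (LEFT t) = pT (LEFT t')" using bitf_inj[OF _ _ _ _ assms(6)] assms(4) by (auto simp: pathok_def)
  then show ?thesis using label_code(1)[OF assms(1)] label_code(1)[OF assms(2)] assms(4,5) by metis
qed

lemma label_inj_B:
  assumes "t \<in> TS False n" "t' \<in> TS False n" "1 \<le> n"
    and "pL n (BOTTOM t) = pL n (BOTTOM t')" "pK (BOTTOM t) = pK (BOTTOM t')"
    and "\<And>d. 0 \<le> d \<Longrightarrow> d \<le> pL n (BOTTOM t) \<Longrightarrow> bitf (pT (BOTTOM t)) d = bitf (pT (BOTTOM t')) d"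
  shows "BOTTOM t = BOTTOM t'"
  using label_inj[OF TS_hat[OF assms(1)] TS_hat[OF assms(2)] assms(3)] assms(4-6) by simp

definition isJ :: "tile \<Rightarrow> bool" where "isJ t \<longleftrightarrow> lcls (LEFT t) = 0 \<and> lcls (BOTTOM t) = 0"

lemma isJ_blk: "0 \<le> d1 \<Longrightarrow> 0 \<le> d2 \<Longrightarrow> isJ (blk n kv tv kh th d1 d2) \<longleftrightarrow> d1 = 0 \<and> d2 = 0"
  by (auto simp: isJ_def blk_def lcls_def)

lemma range_strict_eq:
  fixes f g :: "int \<Rightarrow> int"
  assumes f: "\<And>i. f i < f (i + 1)" and g: "\<And>i. g i < g (i + 1)" and r: "range f = range g" and 0: "f 0 = g 0"
  shows "f = g"
proof -
  have fs: "i < j \<Longrightarrow> f i < f j" for i j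
  proof (induct j rule: int_gr_induct)
    case base then show ?case using f by simp
  next
    case (step j) then show ?case using f[of j] by simp
  qed
  have gs: "i < j \<Longrightarrow> g i < g j" for i j
  proof (induct j rule: int_gr_induct)
    case base then show ?case using g by simp
  next
    case (step j) then show ?case using g[of j] by simp
  qed
  have fm: "f i \<le> f j \<longleftrightarrow> i \<le> j" for i j
  proof
    assume a: "f i \<le> f j" show "i \<le> j"
    proof (rule ccontr)
      assume "\<not> i \<le> j" then have "f j < f i" using fs[of j i] by simp
      then show False using a by simp
    qed
  next
    assume "i \<le> j" then show "f i \<le> f j" using fs[of i j] by (cases "i = j") auto
  qed
  have gm: "g i \<le> g j \<longleftrightarrow> i \<le> j" for i j
  proof
    assume a: "g i \<le> g j" show "i \<le> j"
    proof (rule ccontr)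
      assume "\<not> i \<le> j" then have "g j < g i" using gs[of j i] by simp
      then show False using a by simp
    qed
  next
    assume "i \<le> j" then show "g i \<le> g j" using gs[of i j] by (cases "i = j") auto
  qed
  have up: "f (i + 1) = g (i + 1)" if "f i = g i" for i
  proof -
    obtain j where j: "f (i + 1) = g j" using r by (metis rangeI image_iff)
    obtain j' where j': "g (i + 1) = f j'" using r by (metis rangeI image_iff)
    have "i < j" using j that f[of i] gm[of j i] by auto
    then have "g (i + 1) \<le> f (i + 1)" using j gm[of "i+1" j] by simp
    have "i < j'" using j' that g[of i] fm[of j' i] by auto
    then have "f (i + 1) \<le> g (i + 1)" using j' fm[of "i+1" j'] by simp
    show ?thesis using \<open>g (i + 1) \<le> f (i + 1)\<close> \<open>f (i + 1) \<le> g (i + 1)\<close> by simp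
  qed
  have down: "f (i - 1) = g (i - 1)" if "f i = g i" for i
  proof -
    obtain j where j: "f (i - 1) = g j" using r by (metis rangeI image_iff)
    obtain j' where j': "g (i - 1) = f j'" using r by (metis rangeI image_iff)
    have "j < i" using j that f[of "i - 1"] gm[of i j] by auto
    then have "f (i - 1) \<le> g (i - 1)" using j gm[of j "i - 1"] by simp
    have "j' < i" using j' that g[of "i - 1"] fm[of i j'] by auto
    then have "g (i - 1) \<le> f (i - 1)" using j' fm[of j' "i - 1"] by simp
    show ?thesis using \<open>g (i - 1) \<le> f (i - 1)\<close> \<open>f (i - 1) \<le> g (i - 1)\<close> by simp
  qed
  show ?thesis
  proof
    fix i show "f i = g i"
    proof (induct i rule: int_induct[where k=0])
      case base then show ?case using 0 .
    next
      case (step1 i) then show ?case using up by simp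
    next
      case (step2 i) then show ?case using down by simp
    qed
  qed
qed

context scfg
begin

lemma isJ_cell:
  "isJ (subst_cfg (omega n) x (p1, p2)) \<longleftrightarrow> p1 \<in> range (blk_pos WW) \<and> p2 \<in> range (blk_pos HH)"
proof -
  obtain i j d1 d2 where c: "p1 = blk_pos WW i + d1" "p2 = blk_pos HH j + d2"
    "0 \<le> d1" "d1 \<le> pL n (BOTTOM (x (i, j)))" "0 \<le> d2" "d2 \<le> pL n (LEFT (x (i, j)))"
    by (rule cell_exists)
  have e: "isJ (subst_cfg (omega n) x (p1, p2)) \<longleftrightarrow> d1 = 0 \<and> d2 = 0"
    using cell_eval[OF c(3-6)] c isJ_blk by (simp add: blockc_def)
  have r1: "p1 \<in> range (blk_pos WW) \<longleftrightarrow> d1 = 0"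
  proof
    assume "p1 \<in> range (blk_pos WW)"
    then obtain i' where i': "p1 = blk_pos WW i'" by blast
    have "i' = i"
      by (rule bp_unique[of WW, OF WW_pos]) (use i' c bp_lt[of WW, OF WW_pos] bp_succ[of WW i] WW_eq[of i j] in auto)
    then show "d1 = 0" using i' c by simp
  qed (use c in auto)
  have r2: "p2 \<in> range (blk_pos HH) \<longleftrightarrow> d2 = 0"
  proof
    assume "p2 \<in> range (blk_pos HH)"
    then obtain j' where j': "p2 = blk_pos HH j'" by blast
    have "j' = j"
      by (rule bp_unique[of HH, OF HH_pos]) (use j' c bp_lt[of HH, OF HH_pos] bp_succ[of HH j] HH_eq[where i=i and j=j] in auto)
    then show "d2 = 0" using j' c by simp
  qed (use c in auto)
  show ?thesis using e r1 r2 by simp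
qed

lemma leftcol:
  assumes "0 \<le> d2" "d2 \<le> pL n (LEFT (x (i, j)))"
  shows "LEFT (subst_cfg (omega n) x (blk_pos WW i, blk_pos HH j + d2)) =
    (if d2 = 0 then (0, pK (LEFT (x (i,j))), bitf (pT (LEFT (x (i,j)))) 0 + int n)
     else (1, 1, int n + bitf (pT (LEFT (x (i,j)))) d2))"
  using cell_eval[of 0 i j d2] assms pL_nonneg[OF n1] by (simp add: blockc_def blk_LEFT0)

lemma botrow:
  assumes "0 \<le> d1" "d1 \<le> pL n (BOTTOM (x (i, j)))"
  shows "BOTTOM (subst_cfg (omega n) x (blk_pos WW i + d1, blk_pos HH j)) =
    (if d1 = 0 then (0, pK (BOTTOM (x (i,j))), bitf (pT (BOTTOM (x (i,j)))) 0 + int n)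
     else (1, 1, int n + bitf (pT (BOTTOM (x (i,j)))) d1))"
  using cell_eval[of d1 i j 0] assms pL_nonneg[OF n1] by (simp add: blockc_def blk_BOTTOM0)

end

lemma recog_main:
  assumes x: "valid (TS False n) x" and x': "valid (TS False n) x'" and n: "1 \<le> n"
    and eq: "shift k (subst_cfg (omega n) x) = shift k' (subst_cfg (omega n) x')"
    and b: "0 \<le> fst k" "fst k < int (fst (wsize (omega n (x (0, 0)))))"
      "0 \<le> snd k" "snd k < int (snd (wsize (omega n (x (0, 0)))))"
      "0 \<le> fst k'" "fst k' < int (fst (wsize (omega n (x' (0, 0)))))"
      "0 \<le> snd k'" "snd k' < int (snd (wsize (omega n (x' (0, 0)))))"
  shows "k = k' \<and> x = x'"
proof -
  interpret X: scfg n x using x n by unfold_locales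
  interpret X': scfg n x' using x' n by unfold_locales
  let ?z = "subst_cfg (omega n) x" and ?z' = "subst_cfg (omega n) x'"
  obtain k1 k2 where k: "k = (k1, k2)" by fastforce
  obtain k1' k2' where k': "k' = (k1', k2')" by fastforce
  have pt: "?z (p1 + k1, p2 + k2) = ?z' (p1 + k1', p2 + k2')" for p1 p2
    using fun_cong[OF eq, of "(p1, p2)"] k k' by (simp add: shift_def)
  have R1: "(p1 + k1 \<in> range (blk_pos X.WW)) \<longleftrightarrow> (p1 + k1' \<in> range (blk_pos X'.WW))" for p1
  proof -
    have "(p1 + k1 \<in> range (blk_pos X.WW)) \<longleftrightarrow> isJ (?z (p1 + k1, blk_pos X.HH 0))"
      using X.isJ_cell by blast
    also have "\<dots> \<longleftrightarrow> isJ (?z' (p1 + k1', blk_pos X.HH 0 - k2 + k2'))"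
      using pt[of p1 "blk_pos X.HH 0 - k2"] by simp
    also have "\<dots> \<longrightarrow> (p1 + k1' \<in> range (blk_pos X'.WW))" using X'.isJ_cell by blast
    finally have a: "(p1 + k1 \<in> range (blk_pos X.WW)) \<longrightarrow> (p1 + k1' \<in> range (blk_pos X'.WW))" .
    have "(p1 + k1' \<in> range (blk_pos X'.WW)) \<longleftrightarrow> isJ (?z' (p1 + k1', blk_pos X'.HH 0))"
      using X'.isJ_cell by blast
    also have "\<dots> \<longleftrightarrow> isJ (?z (p1 + k1, blk_pos X'.HH 0 - k2' + k2))"
      using pt[of p1 "blk_pos X'.HH 0 - k2'"] by simp
    also have "\<dots> \<longrightarrow> (p1 + k1 \<in> range (blk_pos X.WW))" using X.isJ_cell by blast
    finally show ?thesis using a by blast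
  qed
  have R2: "(p2 + k2 \<in> range (blk_pos X.HH)) \<longleftrightarrow> (p2 + k2' \<in> range (blk_pos X'.HH))" for p2
  proof -
    have "(p2 + k2 \<in> range (blk_pos X.HH)) \<longleftrightarrow> isJ (?z (blk_pos X.WW 0, p2 + k2))"
      using X.isJ_cell by blast
    also have "\<dots> \<longleftrightarrow> isJ (?z' (blk_pos X.WW 0 - k1 + k1', p2 + k2'))"
      using pt[of "blk_pos X.WW 0 - k1" p2] by simp
    also have "\<dots> \<longrightarrow> (p2 + k2' \<in> range (blk_pos X'.HH))" using X'.isJ_cell by blast
    finally have a: "(p2 + k2 \<in> range (blk_pos X.HH)) \<longrightarrow> (p2 + k2' \<in> range (blk_pos X'.HH))" .
    have "(p2 + k2' \<in> range (blk_pos X'.HH)) \<longleftrightarrow> isJ (?z' (blk_pos X'.WW 0, p2 + k2'))"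
      using X'.isJ_cell by blast
    also have "\<dots> \<longleftrightarrow> isJ (?z (blk_pos X'.WW 0 - k1' + k1, p2 + k2))"
      using pt[of "blk_pos X'.WW 0 - k1'" p2] by simp
    also have "\<dots> \<longrightarrow> (p2 + k2 \<in> range (blk_pos X.HH))" using X.isJ_cell by blast
    finally show ?thesis using a by blast
  qed
    have gap: "\<not> (0 < q \<and> q < blk_pos W 1)" if qr: "q \<in> range (blk_pos W)" and Wp: "\<And>i. 1 \<le> W i" for q and W :: "int \<Rightarrow> nat"
  proof
    assume q: "0 < q \<and> q < blk_pos W 1"
    from qr obtain i where i: "q = blk_pos W i" by blast
    have "0 < i"
    proof (rule ccontr)
      assume "\<not> 0 < i"
      then have "blk_pos W i \<le> blk_pos W 0" using bp_mono[of W, OF Wp, of i 0] by simp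
      then show False using q i by simp
    qed
    then have "blk_pos W 1 \<le> blk_pos W i" using bp_mono[of W, OF Wp, of 1 i] by simp
    then show False using q i by simp
  qed
  have W1: "blk_pos X.WW 1 = int (X.WW 0)" "blk_pos X'.WW 1 = int (X'.WW 0)"
    "blk_pos X.HH 1 = int (X.HH 0)" "blk_pos X'.HH 1 = int (X'.HH 0)"
    using bp_succ[of _ 0] by (metis add_0 bp_0)+
  have z0: "0 \<in> range (blk_pos W)" for W :: "int \<Rightarrow> nat"
    using rangeI[of "blk_pos W" 0] by simp
  have k1e: "k1 = k1'"
  proof (rule ccontr)
    assume "k1 \<noteq> k1'"
    then consider "k1 < k1'" | "k1' < k1" by linarith
    then show False
    proof cases
      case 1
      have "-k1 + k1' \<in> range (blk_pos X'.WW)" using R1[of "-k1"] z0[of X.WW] by simp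
      from gap[OF this X'.WW_pos] have "\<not> (0 < -k1 + k1' \<and> -k1 + k1' < int (X'.WW 0))" using W1 by simp
      moreover have "k1' < int (X'.WW 0)" "0 \<le> k1" using b(1,6) k k' by simp_all
      ultimately show False using 1 by linarith
    next
      case 2
      have "-k1' + k1 \<in> range (blk_pos X.WW)" using R1[of "-k1'"] z0[of X'.WW] by simp
      from gap[OF this X.WW_pos] have "\<not> (0 < -k1' + k1 \<and> -k1' + k1 < int (X.WW 0))" using W1 by simp
      moreover have "k1 < int (X.WW 0)" "0 \<le> k1'" using b(2,5) k k' by simp_all
      ultimately show False using 2 by linarith
    qed
  qed
  have k2e: "k2 = k2'"
  proof (rule ccontr)
    assume "k2 \<noteq> k2'"
    then consider "k2 < k2'" | "k2' < k2" by linarith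
    then show False
    proof cases
      case 1
      have "-k2 + k2' \<in> range (blk_pos X'.HH)" using R2[of "-k2"] z0[of X.HH] by simp
      from gap[OF this X'.HH_pos] have "\<not> (0 < -k2 + k2' \<and> -k2 + k2' < int (X'.HH 0))" using W1 by simp
      moreover have "k2' < int (X'.HH 0)" "0 \<le> k2" using b(3,8) k k' by simp_all
      ultimately show False using 1 by linarith
    next
      case 2
      have "-k2' + k2 \<in> range (blk_pos X.HH)" using R2[of "-k2'"] z0[of X'.HH] by simp
      from gap[OF this X.HH_pos] have "\<not> (0 < -k2' + k2 \<and> -k2' + k2 < int (X.HH 0))" using W1 by simp
      moreover have "k2 < int (X.HH 0)" "0 \<le> k2'" using b(4,7) k k' by simp_all
      ultimately show False using 2 by linarith
    qed
  qed
  have zz: "?z = ?z'"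
  proof
    fix p :: "int \<times> int"
    obtain p1 p2 where p: "p = (p1, p2)" by fastforce
    show "?z p = ?z' p" using pt[of "p1 - k1" "p2 - k2"] k1e k2e p by simp
  qed
  have rW: "range (blk_pos X.WW) = range (blk_pos X'.WW)"
  proof -
    have "q \<in> range (blk_pos X.WW) \<longleftrightarrow> q \<in> range (blk_pos X'.WW)" for q
      using R1[of "q - k1"] k1e by simp
    then show ?thesis by blast
  qed
  have rH: "range (blk_pos X.HH) = range (blk_pos X'.HH)"
  proof -
    have "q \<in> range (blk_pos X.HH) \<longleftrightarrow> q \<in> range (blk_pos X'.HH)" for q
      using R2[of "q - k2"] k2e by simp
    then show ?thesis by blast
  qed
  have bW: "blk_pos X.WW = blk_pos X'.WW"
    by (rule range_strict_eq[OF bp_lt[of X.WW, OF X.WW_pos] bp_lt[of X'.WW, OF X'.WW_pos] rW]) simp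
  have bH: "blk_pos X.HH = blk_pos X'.HH"
    by (rule range_strict_eq[OF bp_lt[of X.HH, OF X.HH_pos] bp_lt[of X'.HH, OF X'.HH_pos] rH]) simp
  have WWe: "X.WW i = X'.WW i" for i
    using fun_cong[OF bW, of "i+1"] fun_cong[OF bW, of i] bp_succ[of X.WW i] bp_succ[of X'.WW i] by simp
  have HHe: "X.HH j = X'.HH j" for j
    using fun_cong[OF bH, of "j+1"] fun_cong[OF bH, of j] bp_succ[of X.HH j] bp_succ[of X'.HH j] by simp
  have xx: "x (i, j) = x' (i, j)" for i j
  proof -
    let ?t = "x (i,j)" and ?t' = "x' (i,j)"
    have t: "?t \<in> TS False n" "?t' \<in> TS False n" using X.inS X'.inS by auto
    have pLv: "pL n (LEFT ?t) = pL n (LEFT ?t')" using X.HH_eq[where i=i and j=j] X'.HH_eq[where i=i and j=j] HHe[of j] by simp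
    have pLh: "pL n (BOTTOM ?t) = pL n (BOTTOM ?t')" using X.WW_eq[of i j] X'.WW_eq[of i j] WWe[of i] by simp
    have lc: "(if d2 = 0 then (0::int, pK (LEFT ?t), bitf (pT (LEFT ?t)) 0 + int n) else (1, 1, int n + bitf (pT (LEFT ?t)) d2)) =
      (if d2 = 0 then (0, pK (LEFT ?t'), bitf (pT (LEFT ?t')) 0 + int n) else (1, 1, int n + bitf (pT (LEFT ?t')) d2))"
      if a: "0 \<le> d2" "d2 \<le> pL n (LEFT ?t)" for d2
    proof -
      have e1: "LEFT (?z (blk_pos X.WW i, blk_pos X.HH j + d2)) =
        (if d2 = 0 then (0, pK (LEFT ?t), bitf (pT (LEFT ?t)) 0 + int n) else (1, 1, int n + bitf (pT (LEFT ?t)) d2))"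
        by (rule X.leftcol) (use a in auto)
      have e2: "LEFT (?z' (blk_pos X'.WW i, blk_pos X'.HH j + d2)) =
        (if d2 = 0 then (0, pK (LEFT ?t'), bitf (pT (LEFT ?t')) 0 + int n) else (1, 1, int n + bitf (pT (LEFT ?t')) d2))"
        by (rule X'.leftcol) (use a pLv in auto)
      have e: "?z (blk_pos X.WW i, blk_pos X.HH j + d2) = ?z' (blk_pos X'.WW i, blk_pos X'.HH j + d2)"
        using zz bW bH by simp
      show ?thesis by (rule trans[OF e1[symmetric] trans[OF arg_cong[where f=LEFT, OF e] e2]])
    qed
    have br: "(if d1 = 0 then (0::int, pK (BOTTOM ?t), bitf (pT (BOTTOM ?t)) 0 + int n) else (1, 1, int n + bitf (pT (BOTTOM ?t)) d1)) =
      (if d1 = 0 then (0, pK (BOTTOM ?t'), bitf (pT (BOTTOM ?t')) 0 + int n) else (1, 1, int n + bitf (pT (BOTTOM ?t')) d1))"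
      if a: "0 \<le> d1" "d1 \<le> pL n (BOTTOM ?t)" for d1
    proof -
      have e1: "BOTTOM (?z (blk_pos X.WW i + d1, blk_pos X.HH j)) =
        (if d1 = 0 then (0, pK (BOTTOM ?t), bitf (pT (BOTTOM ?t)) 0 + int n) else (1, 1, int n + bitf (pT (BOTTOM ?t)) d1))"
        by (rule X.botrow) (use a in auto)
      have e2: "BOTTOM (?z' (blk_pos X'.WW i + d1, blk_pos X'.HH j)) =
        (if d1 = 0 then (0, pK (BOTTOM ?t'), bitf (pT (BOTTOM ?t')) 0 + int n) else (1, 1, int n + bitf (pT (BOTTOM ?t')) d1))"
        by (rule X'.botrow) (use a pLh in auto)
      have e: "?z (blk_pos X.WW i + d1, blk_pos X.HH j) = ?z' (blk_pos X'.WW i + d1, blk_pos X'.HH j)"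
        using zz bW bH by simp
      show ?thesis by (rule trans[OF e1[symmetric] trans[OF arg_cong[where f=BOTTOM, OF e] e2]])
    qed
    have L: "LEFT ?t = LEFT ?t'"
    proof (rule label_inj[OF t n pLv])
      show "pK (LEFT ?t) = pK (LEFT ?t')" using lc[of 0] pL_nonneg[OF n] by simp
      fix d assume "0 \<le> d" "d \<le> pL n (LEFT ?t)"
      then show "bitf (pT (LEFT ?t)) d = bitf (pT (LEFT ?t')) d" using lc[of d] by (cases "d = 0") auto
    qed
    have B: "BOTTOM ?t = BOTTOM ?t'"
    proof (rule label_inj_B[OF t n pLh])
      show "pK (BOTTOM ?t) = pK (BOTTOM ?t')" using br[of 0] pL_nonneg[OF n] by simp
      fix d assume "0 \<le> d" "d \<le> pL n (BOTTOM ?t)"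
      then show "bitf (pT (BOTTOM ?t)) d = bitf (pT (BOTTOM ?t')) d" using br[of d] by (cases "d = 0") auto
    qed
    show ?thesis by (rule TS_det[OF t L B])
  qed
  show ?thesis using k k' k1e k2e xx by auto
qed

section \<open>Arithmetic of paths\<close>

lemma bitf_01: "bitf a b = 0 \<or> bitf a b = 1" by (simp add: bitf_def)

lemma thresh_exists:
  fixes \<beta> :: "int \<Rightarrow> int"
  assumes "\<And>d. 0 \<le> d \<Longrightarrow> d \<le> int N \<Longrightarrow> \<beta> d = 0 \<or> \<beta> d = 1"
    and "\<And>d. 1 \<le> d \<Longrightarrow> d \<le> int N \<Longrightarrow> \<beta> (d - 1) \<le> \<beta> d"
  shows "\<exists>th. 0 \<le> th \<and> th \<le> int N + 1 \<and> (\<forall>d. 0 \<le> d \<and> d \<le> int N \<longrightarrow> \<beta> d = bitf th d)"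
  using assms
proof (induct N)
  case 0
  then have "\<beta> 0 = 0 \<or> \<beta> 0 = 1" by simp
  then show ?case by (intro exI[of _ "1 - \<beta> 0"]) (auto simp: bitf_def)
next
  case (Suc N)
  have h1: "\<And>d. 0 \<le> d \<Longrightarrow> d \<le> int N \<Longrightarrow> \<beta> d = 0 \<or> \<beta> d = 1" using Suc.prems(1) by simp
  have h2: "\<And>d. 1 \<le> d \<Longrightarrow> d \<le> int N \<Longrightarrow> \<beta> (d - 1) \<le> \<beta> d" using Suc.prems(2) by simp
  obtain th where th: "0 \<le> th" "th \<le> int N + 1" "\<forall>d. 0 \<le> d \<and> d \<le> int N \<longrightarrow> \<beta> d = bitf th d"
    using Suc.hyps[OF h1 h2] by blast
  have b: "\<beta> (int N + 1) = 0 \<or> \<beta> (int N + 1) = 1" using Suc.prems(1)[of "int N + 1"] by simp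
  have m: "\<beta> (int N) \<le> \<beta> (int N + 1)" using Suc.prems(2)[of "int N + 1"] by simp
  show ?case
  proof (cases "\<beta> (int N + 1) = 1")
    case True
    show ?thesis
    proof (intro exI[of _ th] conjI allI impI)
      fix d assume d: "0 \<le> d \<and> d \<le> int (Suc N)"
      show "\<beta> d = bitf th d"
      proof (cases "d \<le> int N")
        case True then show ?thesis using th d by auto
      next
        case False then have "d = int N + 1" using d by simp
        then show ?thesis using \<open>\<beta> (int N + 1) = 1\<close> th by (simp add: bitf_def)
      qed
    qed (use th in auto)
  next
    case False
    then have b0: "\<beta> (int N + 1) = 0" using b by simp
    then have "\<beta> (int N) = 0" using m Suc.prems(1)[of "int N"] by auto
    then have "th = int N + 1" using th(2) th(3)[rule_format, of "int N"] by (auto simp: bitf_def split: if_splits)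
    show ?thesis
    proof (intro exI[of _ "int N + 2"] conjI allI impI)
      fix d assume d: "0 \<le> d \<and> d \<le> int (Suc N)"
      show "\<beta> d = bitf (int N + 2) d"
      proof (cases "d \<le> int N")
        case True then show ?thesis using th d \<open>th = int N + 1\<close> by (auto simp: bitf_def)
      next
        case False then have "d = int N + 1" using d by simp
        then show ?thesis using b0 by (simp add: bitf_def)
      qed
    qed auto
  qed
qed

lemma shift_lemma:
  assumes "0 \<le> a" "a \<le> L" "1 \<le> b" "b \<le> L + 1"
    and "\<And>d. 1 \<le> d \<Longrightarrow> d \<le> L \<Longrightarrow> bitf a (d - 1) = bitf b d"
  shows "b = a + 1"
proof (rule ccontr)
  assume "b \<noteq> a + 1"
  then consider "b \<le> a" | "a + 2 \<le> b" by linarith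
  then show False
  proof cases
    case 1 then show False using assms(5)[of b] assms by (simp add: bitf_def)
  next
    case 2 then show False using assms(5)[of "a + 1"] assms by (simp add: bitf_def)
  qed
qed

lemma lcode_rt:
  assumes "pathok n k th L"
  shows "pK (lcode n k th L) = k" "pT (lcode n k th L) = th" "pL n (lcode n k th L) = L"
  using assms by (auto simp: pathok_def lcode_def pdefs)

locale dec =
  fixes n :: nat and kv tv kv' tv' kh th kh' th' Lv Lh :: int
  assumes n1: "1 \<le> n"
    and P: "pathok n kv tv Lv" "pathok n kv' tv' Lv" "pathok n kh th Lh" "pathok n kh' th' Lh"
    and R1: "\<And>d. 1 \<le> d \<Longrightarrow> d \<le> Lv \<Longrightarrow> 1 + bitf tv (d - 1) + Lh = int n + bitf tv' d"
    and R3: "bitf th Lh = kv'" "kh + Lh = bitf tv' 0 + int n"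
    and R2: "\<And>d. 1 \<le> d \<Longrightarrow> d \<le> Lh \<Longrightarrow> 1 + bitf th (d - 1) + Lv = int n + bitf th' d"
    and R4: "bitf tv Lv = kh'" "kv + Lv = bitf th' 0 + int n"
begin

lemma dec_sym: "dec n kh th kh' th' kv tv kv' tv' Lh Lv"
  using n1 P R1 R2 R3 R4 by unfold_locales auto

lemma Ls: "Lv = int n - 1 \<or> Lv = int n" "Lh = int n - 1 \<or> Lh = int n"
  using P by (auto simp: pathok_def)

lemma caseA:
  assumes "Lv = int n - 1" "Lh = int n - 1"
  shows "(lcode n kv' tv' Lv, lcode n kh' th' Lh, lcode n kv tv Lv, lcode n kh th Lh) \<in> TS True n"
proof -
  have kh: "kh = 1" "1 \<le> tv'" using R3(2) P(3) assms bitf_01[of tv' 0]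
    by (auto simp: pathok_def bitf_def split: if_splits)
  have kv: "kv = 1" "1 \<le> th'" using R4(2) P(1) assms bitf_01[of th' 0]
    by (auto simp: pathok_def bitf_def split: if_splits)
  have tv: "tv \<le> int n - 1"
  proof (rule ccontr)
    assume "\<not> ?thesis"
    then have "bitf tv Lv = 0" using assms by (simp add: bitf_def)
    then show False using R4(1) P(4) assms by (auto simp: pathok_def)
  qed
  have th: "th \<le> int n - 1"
  proof (rule ccontr)
    assume "\<not> ?thesis"
    then have "bitf th Lh = 0" using assms by (simp add: bitf_def)
    then show False using R3(1) P(2) assms by (auto simp: pathok_def)
  qed
  have tv': "tv' = tv + 1"
    by (rule shift_lemma[of tv "int n - 1"]) (use P(1,2) R1 assms kh tv in \<open>auto simp: pathok_def\<close>)
  have th': "th' = th + 1"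
    by (rule shift_lemma[of th "int n - 1"]) (use P(3,4) R2 assms kv th in \<open>auto simp: pathok_def\<close>)
  have "Wt (1 + tv) (1 + th) \<in> TS True n"
    by (rule TS_W) (use P(1,3) tv th in \<open>auto simp: pathok_def\<close>)
  moreover have "Wt (1 + tv) (1 + th) = (lcode n kv' tv' Lv, lcode n kh' th' Lh, lcode n kv tv Lv, lcode n kh th Lh)"
    using assms tv' th' by (simp add: lcode_def Wt_def algebra_simps)
  ultimately show ?thesis by simp
qed

lemma bitf_0: "bitf a d = 0 \<longleftrightarrow> d < a" by (simp add: bitf_def)
lemma bitf_1: "bitf a d = 1 \<longleftrightarrow> a \<le> d" by (simp add: bitf_def)

lemma caseB:
  assumes LvE: "Lv = int n" and LhE: "Lh = int n - 1"
  shows "(lcode n kv' tv' Lv, lcode n kh' th' Lh, lcode n kv tv Lv, lcode n kh th Lh) \<in> TS True n"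
proof -
  have p1: "kv = 0 \<or> kv = 1" "0 \<le> tv" "tv \<le> int n + 1" "tv = 0 \<longrightarrow> kv = 1"
    using P(1) LvE by (auto simp: pathok_def)
  have p2: "kv' = 0 \<or> kv' = 1" "0 \<le> tv'" "tv' \<le> int n + 1" "kv' = 1 \<longrightarrow> tv' \<le> int n"
    using P(2) LvE by (auto simp: pathok_def)
  have p3: "0 \<le> th" "th \<le> int n" using P(3) LhE by (auto simp: pathok_def)
  have p4: "kh' = 1" "0 \<le> th'" "th' \<le> int n" using P(4) LhE by (auto simp: pathok_def)
  have "kh = 1 + bitf tv' 0" using R3(2) LhE by simp
  moreover have "kh \<le> 1" using P(3) by (auto simp: pathok_def)
  ultimately have "bitf tv' 0 = 0" using bitf_01[of tv' 0] by auto
  then have tv'1: "1 \<le> tv'" by (simp add: bitf_0)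
  have tvn: "tv \<le> int n"
  proof (rule ccontr)
    assume "\<not> ?thesis"
    then have "bitf tv Lv = 0" using LvE by (simp add: bitf_0)
    then show False using R4(1) p4 by simp
  qed
  have tv': "tv' = tv + 1"
  proof (rule shift_lemma[of tv "int n"])
    fix d assume "1 \<le> d" "d \<le> int n"
    then show "bitf tv (d - 1) = bitf tv' d" using R1[of d] LvE LhE by simp
  qed (use p1 p2 tvn tv'1 in auto)
  have thge: "int n - 1 \<le> th"
  proof (cases "n = 1")
    case True then show ?thesis using p3 by simp
  next
    case False
    then have "1 \<le> int n - 1" using n1 by simp
    then have "1 + bitf th (int n - 1 - 1) + Lv = int n + bitf th' (int n - 1)" using R2[of "int n - 1"] LhE by simp
    then have "bitf th (int n - 1 - 1) = 0" using LvE bitf_01[of th "int n - 1 - 1"] bitf_01[of th' "int n - 1"] by auto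
    then show ?thesis by (simp add: bitf_0)
  qed
  have th: "th = int n - kv'"
  proof -
    have "bitf th (int n - 1) = kv'" using R3(1) LhE by simp
    then show ?thesis using thge p3 by (cases "th = int n") (auto simp: bitf_def)
  qed
  have th'le: "th' \<le> 1"
  proof (cases "n = 1")
    case True then show ?thesis using p4 by simp
  next
    case False
    then have "1 \<le> Lh" using n1 LhE by simp
    then have "1 + bitf th 0 + Lv = int n + bitf th' 1" using R2[of 1] by simp
    then have "bitf th' 1 = 1" using LvE bitf_01[of th 0] bitf_01[of th' 1] by auto
    then show ?thesis by (simp add: bitf_1)
  qed
  have th': "th' = 1 - kv"
  proof -
    have "kv = bitf th' 0" using R4(2) LvE by simp
    then show ?thesis using th'le p4 by (cases "th' = 0") (auto simp: bitf_def)
  qed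
  have ok: "rkok True n (1 - kv) (1 - kv') tv"
    using p1 p2 tv' tvn unfolding rkok_def by auto
  have "rk n (1 - kv) (1 - kv') tv \<in> TS True n" by (rule TS_R[OF ok])
  moreover have "rk n (1 - kv) (1 - kv') tv = (lcode n kv' tv' Lv, lcode n kh' th' Lh, lcode n kv tv Lv, lcode n kh th Lh)"
    using LvE LhE tv' th th' by (simp add: lcode_def rk_def algebra_simps)
  ultimately show ?thesis by simp
qed

lemma caseD:
  assumes LvE: "Lv = int n" and LhE: "Lh = int n"
  shows "(lcode n kv' tv' Lv, lcode n kh' th' Lh, lcode n kv tv Lv, lcode n kh th Lh) \<in> TS True n"
proof -
  have p1: "0 \<le> tv" "tv \<le> int n + 1" using P(1) LvE by (auto simp: pathok_def)
  have p2: "kv' = 0 \<or> kv' = 1" "0 \<le> tv'" "tv' = 0 \<longrightarrow> kv' = 1" using P(2) by (auto simp: pathok_def)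
  have p3: "0 \<le> th" "th \<le> int n + 1" using P(3) LhE by (auto simp: pathok_def)
  have p4: "kh' = 0 \<or> kh' = 1" "0 \<le> th'" "th' = 0 \<longrightarrow> kh' = 1" using P(4) by (auto simp: pathok_def)
  have r1: "bitf tv (d - 1) = 0 \<and> bitf tv' d = 1" if "1 \<le> d" "d \<le> int n" for d
    using R1[of d] that LvE LhE bitf_01[of tv "d - 1"] bitf_01[of tv' d] by auto
  have r2: "bitf th (d - 1) = 0 \<and> bitf th' d = 1" if "1 \<le> d" "d \<le> int n" for d
    using R2[of d] that LvE LhE bitf_01[of th "d - 1"] bitf_01[of th' d] by auto
  have tvge: "int n \<le> tv" using r1[of "int n"] n1 by (simp add: bitf_0)
  have tv'le: "tv' \<le> 1" using r1[of 1] n1 by (simp add: bitf_1)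
  have thge: "int n \<le> th" using r2[of "int n"] n1 by (simp add: bitf_0)
  have th'le: "th' \<le> 1" using r2[of 1] n1 by (simp add: bitf_1)
  have th: "th = int n + 1 - kv'" using R3(1) LhE thge p3 by (cases "th = int n") (auto simp: bitf_def)
  have tv': "tv' = 1 - kh" using R3(2) LhE tv'le p2 by (cases "tv' = 0") (auto simp: bitf_def)
  have tv: "tv = int n + 1 - kh'" using R4(1) LvE tvge p1 by (cases "tv = int n") (auto simp: bitf_def)
  have th': "th' = 1 - kv" using R4(2) LvE th'le p4 by (cases "th' = 0") (auto simp: bitf_def)
  have ok: "jok True (1 - kv') tv' (1 - kh') th'"
    using p2 p4 tv'le th'le unfolding jok_def PP_def by auto
  have "junction n (1 - kv') tv' (1 - kh') th' \<in> TS True n" by (rule TS_J[OF ok])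
  moreover have "junction n (1 - kv') tv' (1 - kh') th' = (lcode n kv' tv' Lv, lcode n kh' th' Lh, lcode n kv tv Lv, lcode n kh th Lh)"
    using LvE LhE tv th tv' th' by (simp add: lcode_def junction_def algebra_simps)
  ultimately show ?thesis by simp
qed

lemma decode: "(lcode n kv' tv' Lv, lcode n kh' th' Lh, lcode n kv tv Lv, lcode n kh th Lh) \<in> TS True n"
proof -
  consider "Lv = int n - 1" "Lh = int n - 1" | "Lv = int n" "Lh = int n - 1"
    | "Lv = int n - 1" "Lh = int n" | "Lv = int n" "Lh = int n" using Ls by blast
  then show ?thesis
  proof cases
    case 1 then show ?thesis by (rule caseA)
  next
    case 2 then show ?thesis by (rule caseB)
  next
    case 3
    interpret S: dec n kh th kh' th' kv tv kv' tv' Lh Lv by (rule dec_sym)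
    have "(lcode n kh' th' Lh, lcode n kv' tv' Lv, lcode n kh th Lh, lcode n kv tv Lv) \<in> TS True n"
      by (rule S.caseB) (use 3 in auto)
    from TS_hat[OF this] show ?thesis by (simp add: hat_def)
  next
    case 4 then show ?thesis by (rule caseD)
  qed
qed

end

section \<open>Desubstitution\<close>

definition Lv :: "(int \<times> int \<Rightarrow> tile) \<Rightarrow> int \<Rightarrow> int" where
  "Lv y j = rp y (j + 1) - rp y j - 1"
definition vk :: "(int \<times> int \<Rightarrow> tile) \<Rightarrow> int \<Rightarrow> int \<Rightarrow> int" where
  "vk y i j = lctr (TOP (y (cpos y i, rp y j)))"
definition vb :: "(int \<times> int \<Rightarrow> tile) \<Rightarrow> int \<Rightarrow> int \<Rightarrow> int \<Rightarrow> int" where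
  "vb y i j d = lbit (TOP (y (cpos y i, rp y j + d)))"
definition vt :: "(int \<times> int \<Rightarrow> tile) \<Rightarrow> int \<Rightarrow> int \<Rightarrow> int" where
  "vt y i j = (SOME th. 0 \<le> th \<and> th \<le> Lv y j + 1 \<and> (\<forall>d. 0 \<le> d \<and> d \<le> Lv y j \<longrightarrow> vb y i j d = bitf th d))"

definition Lh :: "(int \<times> int \<Rightarrow> tile) \<Rightarrow> int \<Rightarrow> int" where "Lh y i = Lv (trp y) i"
definition hK :: "(int \<times> int \<Rightarrow> tile) \<Rightarrow> int \<Rightarrow> int \<Rightarrow> int" where "hK y i j = vk (trp y) j i"
definition hT :: "(int \<times> int \<Rightarrow> tile) \<Rightarrow> int \<Rightarrow> int \<Rightarrow> int" where "hT y i j = vt (trp y) j i"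

definition Xd :: "nat \<Rightarrow> (int \<times> int \<Rightarrow> tile) \<Rightarrow> (int \<times> int \<Rightarrow> tile)" where
  "Xd n y p = (let i = fst p; j = snd p in
     (lcode n (vk y (i + 1) j) (vt y (i + 1) j) (Lv y j),
      lcode n (hK y i (j + 1)) (hT y i (j + 1)) (Lh y i),
      lcode n (vk y i j) (vt y i j) (Lv y j),
      lcode n (hK y i j) (hT y i j) (Lh y i)))"

lemma cpos_transp[simp]: "cpos (trp y) = rp y" by (rule ext) (simp add: cpos_def)
lemma rp_transp: "rp (trp y) = cpos y" by (rule ext) (simp add: cpos_def)

locale ycfg = cfg n False y for n y
begin

lemma transp_ycfg: "ycfg n (trp y)"
  using transp_cfg unfolding ycfg_def .

lemma cpos_cls: "vc y (cpos y i) = 0"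
proof -
  interpret T: cfg n False "trp y" by (rule transp_cfg)
  show ?thesis using T.rp_cls[of i] by (simp add: vc_transp cpos_def)
qed

lemma cpos_between: "cpos y i < g \<Longrightarrow> g < cpos y (i + 1) \<Longrightarrow> vc y g = 1"
proof -
  interpret T: cfg n False "trp y" by (rule transp_cfg)
  show "cpos y i < g \<Longrightarrow> g < cpos y (i + 1) \<Longrightarrow> vc y g = 1"
    using T.rp_between[of i g] by (simp add: vc_transp cpos_def)
qed

lemma Lv_vals: "Lv y j = int n - 1 \<or> Lv y j = int n"
  using gap_rp[of j] by (simp add: Lv_def)

lemma Lv_nonneg: "0 \<le> Lv y j" using Lv_vals[of j] n1 by auto

lemma rp_Lv: "rp y (j + 1) = rp y j + Lv y j + 1" by (simp add: Lv_def)

lemma row_between: "1 \<le> d \<Longrightarrow> d \<le> Lv y j \<Longrightarrow> hc y (rp y j + d) = 1"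
  using rp_between[of j "rp y j + d"] by (simp add: Lv_def)

lemma ctrV: "0 \<le> d \<Longrightarrow> d \<le> Lv y j \<Longrightarrow> lctr (TOP (y (c, rp y j + d))) = lctr (TOP (y (c, rp y j))) + d"
  using runV[of "nat d" "rp y j" c] row_between[of _ j] by simp

lemma vpath_hk:
  assumes "1 \<le> d" "d \<le> Lv y j"
  shows "y (cpos y i, rp y j + d) = hk n (vb y i j (d - 1)) (vb y i j d) (vk y i j + d - 1)
    \<and> rkok False n (vb y i j (d - 1)) (vb y i j d) (vk y i j + d - 1)"
proof -
  let ?c = "cpos y i" and ?r = "rp y j"
  obtain b0 b1 cc where H: "y (?c, ?r + d) = hk n b0 b1 cc" "rkok False n b0 b1 cc"
    using cls10[OF row_between[OF assms] cpos_cls] by blast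
  have "BOTTOM (y (?c, ?r + (d - 1) + 1)) = TOP (y (?c, ?r + (d - 1)))" by (rule vT)
  then have e: "(0, b0, cc) = TOP (y (?c, ?r + (d - 1)))" using H by simp
  have "lctr (TOP (y (?c, ?r + (d - 1)))) = lctr (TOP (y (?c, ?r))) + (d - 1)"
    by (rule ctrV) (use assms in auto)
  then have "b0 = vb y i j (d - 1)" "cc = vk y i j + d - 1"
    using e by (auto simp: vb_def vk_def lctr_def lbit_def dest: sym)
  moreover have "b1 = vb y i j d" using H by (simp add: vb_def lbit_def)
  ultimately show ?thesis using H by simp
qed

lemma start_J:
  obtains k l rr s where "y (cpos y i, rp y j) = junction n k l rr s" "jok False k l rr s"
  using cls00[OF rp_cls cpos_cls] by blast

lemma vb01: "0 \<le> d \<Longrightarrow> d \<le> Lv y j \<Longrightarrow> vb y i j d = 0 \<or> vb y i j d = 1"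
proof (cases "d = 0")
  case True
  obtain k l rr s where "y (cpos y i, rp y j) = junction n k l rr s" "jok False k l rr s" by (rule start_J)
  then show ?thesis using True by (auto simp: vb_def lbit_def jok_def PP_def)
next
  case False
  assume "0 \<le> d" "d \<le> Lv y j"
  then have "rkok False n (vb y i j (d - 1)) (vb y i j d) (vk y i j + d - 1)" using vpath_hk[of d j i] False by auto
  from rkok_bnd[OF this] show ?thesis by auto
qed

lemma vb_mono: "1 \<le> d \<Longrightarrow> d \<le> Lv y j \<Longrightarrow> vb y i j (d - 1) \<le> vb y i j d"
  using vpath_hk[of d j i] unfolding rkok_def by auto

lemma vt_prop: "0 \<le> vt y i j \<and> vt y i j \<le> Lv y j + 1 \<and> (\<forall>d. 0 \<le> d \<and> d \<le> Lv y j \<longrightarrow> vb y i j d = bitf (vt y i j) d)"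
proof -
  have "\<exists>th. 0 \<le> th \<and> th \<le> int (nat (Lv y j)) + 1 \<and> (\<forall>d. 0 \<le> d \<and> d \<le> int (nat (Lv y j)) \<longrightarrow> vb y i j d = bitf th d)"
    by (rule thresh_exists) (use vb01 vb_mono Lv_nonneg in auto)
  then have "\<exists>th. 0 \<le> th \<and> th \<le> Lv y j + 1 \<and> (\<forall>d. 0 \<le> d \<and> d \<le> Lv y j \<longrightarrow> vb y i j d = bitf th d)"
    using Lv_nonneg[of j] by simp
  then show ?thesis unfolding vt_def by (rule someI_ex)
qed

lemma vb_bitf: "0 \<le> d \<Longrightarrow> d \<le> Lv y j \<Longrightarrow> vb y i j d = bitf (vt y i j) d"
  using vt_prop by blast

lemma end_J:
  obtains k l rr s where "y (cpos y i, rp y (j + 1)) = junction n k l rr s" "jok False k l rr s"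
    "l = vb y i j (Lv y j)" "k + int n = vk y i j + Lv y j"
proof -
  obtain k l rr s where J: "y (cpos y i, rp y (j + 1)) = junction n k l rr s" "jok False k l rr s"
    using cls00[OF rp_cls cpos_cls] by blast
  have "BOTTOM (y (cpos y i, rp y j + Lv y j + 1)) = TOP (y (cpos y i, rp y j + Lv y j))" by (rule vT)
  moreover have "lctr (TOP (y (cpos y i, rp y j + Lv y j))) = vk y i j + Lv y j"
    using ctrV[of "Lv y j" j "cpos y i"] Lv_nonneg[of j] by (simp add: vk_def)
  ultimately have "l = vb y i j (Lv y j)" "k + int n = vk y i j + Lv y j"
    using J rp_Lv[of j] by (auto simp: vb_def lbit_def lctr_def dest: sym)
  then show ?thesis using J that by blast
qed

lemma pathV: "pathok n (vk y i j) (vt y i j) (Lv y j)"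
proof -
  obtain k l rr s where J: "y (cpos y i, rp y j) = junction n k l rr s" "jok False k l rr s" by (rule start_J)
  obtain k' l' rr' s' where J': "y (cpos y i, rp y (j + 1)) = junction n k' l' rr' s'" "jok False k' l' rr' s'"
    "l' = vb y i j (Lv y j)" "k' + int n = vk y i j + Lv y j" by (rule end_J)
  have s: "vk y i j = s" "vb y i j 0 = rr" using J by (simp_all add: vk_def vb_def lctr_def lbit_def)
  have vp: "0 \<le> vt y i j" "vt y i j \<le> Lv y j + 1" using vt_prop by auto
  have b0: "vb y i j 0 = bitf (vt y i j) 0" and bL: "vb y i j (Lv y j) = bitf (vt y i j) (Lv y j)"
    using vb_bitf Lv_nonneg by auto
  show ?thesis unfolding pathok_def
  proof (intro conjI impI)
    show "vk y i j = 0 \<or> vk y i j = 1" using s J(2) by (auto simp: jok_def PP_def)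
    show "Lv y j = int n - 1 \<or> Lv y j = int n" by (rule Lv_vals)
    show "0 \<le> vt y i j" "vt y i j \<le> Lv y j + 1" using vp by auto
    show "vk y i j = 1" if "vt y i j = 0"
      using that b0 s J(2) by (auto simp: bitf_def jok_def PP_def)
    show "vk y i j + Lv y j = int n \<or> vk y i j + Lv y j = int n + 1"
      using J'(2,4) by (auto simp: jok_def PP_def)
    show "vt y i j \<le> Lv y j" if "vk y i j + Lv y j = int n + 1"
    proof -
      have "k' = 1" using that J'(4) by simp
      then have "l' = 1" using J'(2) by (auto simp: jok_def PP_def)
      then show ?thesis using J'(3) bL by (simp add: bitf_def split: if_splits)
    qed
  qed
qed

lemma R1y:
  assumes "1 \<le> d" "d \<le> Lv y j"
  shows "1 + bitf (vt y i j) (d - 1) + Lh y i = int n + bitf (vt y (i + 1) j) d"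
proof -
  let ?c = "cpos y i" and ?c' = "cpos y (i + 1)" and ?\<rho> = "rp y j + d"
  interpret T: ycfg n "trp y" by (rule transp_ycfg)
  have Lh: "?c' = ?c + Lh y i + 1" by (simp add: Lh_def Lv_def rp_transp)
  have Lh0: "0 \<le> Lh y i" using T.Lv_nonneg by (simp add: Lh_def)
  have "lctr (RIGHT (y (?c + int (nat (Lh y i)), ?\<rho>))) = lctr (RIGHT (y (?c, ?\<rho>))) + int (nat (Lh y i))"
  proof (rule runH)
    fix d assume "1 \<le> d" "d \<le> int (nat (Lh y i))"
    then show "vc y (cpos y i + d) = 1" using cpos_between[of i "cpos y i + d"] Lh Lh0 by simp
  qed
  then have r: "lctr (RIGHT (y (?c + Lh y i, ?\<rho>))) = lctr (RIGHT (y (?c, ?\<rho>))) + Lh y i" using Lh0 by simp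
  have h1: "y (?c, ?\<rho>) = hk n (vb y i j (d - 1)) (vb y i j d) (vk y i j + d - 1)" using vpath_hk assms by blast
  have h2: "y (?c', ?\<rho>) = hk n (vb y (i+1) j (d - 1)) (vb y (i+1) j d) (vk y (i+1) j + d - 1)" using vpath_hk assms by blast
  have A: "lctr (RIGHT (y (?c + Lh y i, ?\<rho>))) = 1 + vb y i j (d - 1) + Lh y i" using r h1 by (simp add: lctr_def)
  have "LEFT (y (?c + Lh y i + 1, ?\<rho>)) = RIGHT (y (?c + Lh y i, ?\<rho>))" by (rule vR)
  then have B: "RIGHT (y (?c + Lh y i, ?\<rho>)) = (1, 1, int n + vb y (i + 1) j d)" using h2 Lh by simp
  have "int n + vb y (i+1) j d = 1 + vb y i j (d - 1) + Lh y i" using A B by (simp add: lctr_def)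
  then show ?thesis using vb_bitf[of "d - 1" j i] vb_bitf[of d j "i+1"] assms by simp
qed

lemma R4y: "bitf (vt y i j) (Lv y j) = hK y i (j + 1) \<and> vk y i j + Lv y j = bitf (hT y i (j + 1)) 0 + int n"
proof -
  interpret T: ycfg n "trp y" by (rule transp_ycfg)
  obtain k' l' rr' s' where J': "y (cpos y i, rp y (j + 1)) = junction n k' l' rr' s'" "jok False k' l' rr' s'"
    "l' = vb y i j (Lv y j)" "k' + int n = vk y i j + Lv y j" by (rule end_J)
  have "hK y i (j + 1) = l'" using J' by (simp add: hK_def vk_def rp_transp lctr_def)
  moreover have "bitf (hT y i (j + 1)) 0 = k'"
    using T.vb_bitf[of 0 i "j+1"] T.Lv_nonneg[of i] J' by (simp add: hT_def vb_def rp_transp lbit_def)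
  ultimately show ?thesis using J' vb_bitf[of "Lv y j" j i] Lv_nonneg[of j] by simp
qed

lemma dec_cell: "dec n (vk y i j) (vt y i j) (vk y (i+1) j) (vt y (i+1) j) (hK y i j) (hT y i j)
   (hK y i (j+1)) (hT y i (j+1)) (Lv y j) (Lh y i)"
proof -
  interpret T: ycfg n "trp y" by (rule transp_ycfg)
  show ?thesis
  proof (unfold_locales)
    show "1 \<le> n" by (rule n1)
    show "pathok n (vk y i j) (vt y i j) (Lv y j)" by (rule pathV)
    show "pathok n (vk y (i + 1) j) (vt y (i + 1) j) (Lv y j)" by (rule pathV)
    show "pathok n (hK y i j) (hT y i j) (Lh y i)" using T.pathV[of j i] by (simp add: hK_def hT_def Lh_def)
    show "pathok n (hK y i (j + 1)) (hT y i (j + 1)) (Lh y i)" using T.pathV[of "j+1" i] by (simp add: hK_def hT_def Lh_def)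
    show "\<And>d. 1 \<le> d \<Longrightarrow> d \<le> Lv y j \<Longrightarrow> 1 + bitf (vt y i j) (d - 1) + Lh y i = int n + bitf (vt y (i + 1) j) d"
      by (rule R1y)
    show "bitf (hT y i j) (Lh y i) = vk y (i + 1) j" "hK y i j + Lh y i = bitf (vt y (i + 1) j) 0 + int n"
      using T.R4y[of j i] by (simp_all add: hK_def hT_def Lh_def)
    show "\<And>d. 1 \<le> d \<Longrightarrow> d \<le> Lh y i \<Longrightarrow> 1 + bitf (hT y i j) (d - 1) + Lv y j = int n + bitf (hT y i (j + 1)) d"
      using T.R1y[of _ i j] by (simp add: hK_def hT_def Lh_def)
    show "bitf (vt y i j) (Lv y j) = hK y i (j + 1)" "vk y i j + Lv y j = bitf (hT y i (j + 1)) 0 + int n"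
      using R4y[of i j] by auto
  qed
qed

lemma Xd_in: "Xd n y p \<in> TS True n"
proof -
  obtain i j where p: "p = (i, j)" by fastforce
  interpret D: dec n "vk y i j" "vt y i j" "vk y (i+1) j" "vt y (i+1) j" "hK y i j" "hT y i j"
   "hK y i (j+1)" "hT y i (j+1)" "Lv y j" "Lh y i" by (rule dec_cell)
  show ?thesis using D.decode p by (simp add: Xd_def)
qed

lemma Xd_valid: "valid (TS False n) (Xd n y)"
proof -
  have "valid (TS True n) (Xd n y)"
    unfolding valid_def using Xd_in by (auto simp: Xd_def Let_def RIGHT_def LEFT_def TOP_def BOTTOM_def)
  then interpret X: cfg n True "Xd n y" using n1 by unfold_locales
  show ?thesis by (rule X.valid_False)
qed

lemma cell_y:
  assumes "0 \<le> d1" "d1 \<le> Lh y i" "0 \<le> d2" "d2 \<le> Lv y j"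
  shows "y (cpos y i + d1, rp y j + d2) = blk n (vk y i j) (vt y i j) (hK y i j) (hT y i j) d1 d2"
proof -
  interpret T: ycfg n "trp y" by (rule transp_ycfg)
  let ?c = "cpos y i" and ?r = "rp y j"
  have Lh: "cpos y (i + 1) = ?c + Lh y i + 1" by (simp add: Lh_def Lv_def rp_transp)
  have rowp: "y (?c + d, ?r) = rk n (vb (trp y) j i (d - 1)) (vb (trp y) j i d) (hK y i j + d - 1)"
    if "1 \<le> d" "d \<le> Lh y i" for d
  proof -
    have "trp y (?r, ?c + d) = hk n (vb (trp y) j i (d - 1)) (vb (trp y) j i d) (hK y i j + d - 1)"
      using T.vpath_hk[of d i j] that by (simp add: hK_def Lh_def rp_transp)
    then show ?thesis by (metis hat_hat hat_hk transp_app)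
  qed
  have hb: "vb (trp y) j i d = bitf (hT y i j) d" if "0 \<le> d" "d \<le> Lh y i" for d
    using T.vb_bitf[of d i j] that by (simp add: hT_def Lh_def)
  have vbb: "vb y i j d = bitf (vt y i j) d" if "0 \<le> d" "d \<le> Lv y j" for d
    using vb_bitf that by blast
  show ?thesis
  proof (cases "d1 = 0")
    case True note d1 = this
    show ?thesis
    proof (cases "d2 = 0")
      case True
      obtain k l rr s where J: "y (?c, ?r) = junction n k l rr s" "jok False k l rr s" by (rule start_J)
      have "k = vb (trp y) j i 0" "l = hK y i j" "rr = vb y i j 0" "s = vk y i j"
        using J by (simp_all add: vb_def hK_def vk_def rp_transp lbit_def lctr_def)
      then show ?thesis using J d1 True hb[of 0] vbb[of 0] Lv_nonneg[of j] T.Lv_nonneg[of i]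
        by (simp add: blk_def Lh_def)
    next
      case False
      then show ?thesis using vpath_hk[of d2 j i] assms d1 vbb[of d2] vbb[of "d2 - 1"] by (simp add: blk_def)
    qed
  next
    case False note d1 = this
    show ?thesis
    proof (cases "d2 = 0")
      case True
      then show ?thesis using rowp[of d1] assms d1 hb[of d1] hb[of "d1 - 1"] by (simp add: blk_def)
    next
      case False note d2 = this
      have h: "hc y (?r + d2) = 1" using row_between[of d2 j] assms d2 by simp
      have v: "vc y (?c + d1) = 1" using cpos_between[of i "?c + d1"] assms d1 Lh by simp
      obtain a b where W: "y (?c + d1, ?r + d2) = Wt a b" using cls11[OF h v] by blast
      have ra: "lctr (RIGHT (y (?c + int (nat (d1 - 1)), ?r + d2))) = lctr (RIGHT (y (?c, ?r + d2))) + int (nat (d1 - 1))"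
      proof (rule runH)
        fix d assume "1 \<le> d" "d \<le> int (nat (d1 - 1))"
        then show "vc y (?c + d) = 1" using cpos_between[of i "?c + d"] assms Lh d1 by simp
      qed
      have "LEFT (y (?c + (d1 - 1) + 1, ?r + d2)) = RIGHT (y (?c + (d1 - 1), ?r + d2))" by (rule vR)
      then have "a = lctr (RIGHT (y (?c + (d1 - 1), ?r + d2)))" using W by (simp add: lctr_def) (metis snd_conv)
      also have "\<dots> = lctr (RIGHT (y (?c, ?r + d2))) + (d1 - 1)" using ra assms d1 by simp
      also have "\<dots> = 1 + vb y i j (d2 - 1) + (d1 - 1)" using vpath_hk[of d2 j i] assms d2 by (simp add: lctr_def)
      finally have a: "a = bitf (vt y i j) (d2 - 1) + d1" using vbb[of "d2 - 1"] assms d2 by simp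
      have rb: "lctr (TOP (y (?c + d1, ?r + (d2 - 1)))) = lctr (TOP (y (?c + d1, ?r))) + (d2 - 1)"
        by (rule ctrV) (use assms d2 in auto)
      have "BOTTOM (y (?c + d1, ?r + (d2 - 1) + 1)) = TOP (y (?c + d1, ?r + (d2 - 1)))" by (rule vT)
      then have "b = lctr (TOP (y (?c + d1, ?r + (d2 - 1))))" using W by (simp add: lctr_def) (metis snd_conv)
      also have "\<dots> = 1 + vb (trp y) j i (d1 - 1) + (d2 - 1)" using rb rowp[of d1] assms d1 by (simp add: lctr_def)
      finally have b: "b = bitf (hT y i j) (d1 - 1) + d2" using hb[of "d1 - 1"] assms d1 by simp
      show ?thesis using W a b d1 d2 by (simp add: blk_def)
    qed
  qed
qed

lemma Xd_LEFT: "LEFT (Xd n y (i, j)) = lcode n (vk y i j) (vt y i j) (Lv y j)"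
  by (simp add: Xd_def LEFT_def)
lemma Xd_BOTTOM: "BOTTOM (Xd n y (i, j)) = lcode n (hK y i j) (hT y i j) (Lh y i)"
  by (simp add: Xd_def BOTTOM_def)

lemma pathH: "pathok n (hK y i j) (hT y i j) (Lh y i)"
proof -
  interpret T: ycfg n "trp y" by (rule transp_ycfg)
  show ?thesis using T.pathV[of j i] by (simp add: hK_def hT_def Lh_def)
qed

lemma onto_y: "\<exists>k x. valid (TS False n) x \<and> y = shift k (subst_cfg (omega n) x)"
proof -
  define x where "x = Xd n y"
  have vx: "valid (TS False n) x" unfolding x_def by (rule Xd_valid)
  interpret X: scfg n x using vx n1 by unfold_locales
  interpret T: ycfg n "trp y" by (rule transp_ycfg)
  have pLB: "pL n (BOTTOM (x (i, j))) = Lh y i" for i j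
    unfolding x_def Xd_BOTTOM by (rule lcode_rt(3)[OF pathH])
  have pLL: "pL n (LEFT (x (i, j))) = Lv y j" for i j
    unfolding x_def Xd_LEFT by (rule lcode_rt(3)[OF pathV])
  have bc: "blockc n (LEFT (x (i, j))) (BOTTOM (x (i, j))) d1 d2 = blk n (vk y i j) (vt y i j) (hK y i j) (hT y i j) d1 d2" for i j d1 d2
    unfolding x_def Xd_LEFT Xd_BOTTOM blockc_def using lcode_rt[OF pathV] lcode_rt[OF pathH] by simp
  have WWv: "int (X.WW i) = cpos y (i + 1) - cpos y i" for i
    using X.WW_eq[of i 0] pLB[of i 0] by (simp add: Lh_def Lv_def rp_transp)
  have HHv: "int (X.HH j) = rp y (j + 1) - rp y j" for j
    using X.HH_eq[where i=0 and j=j] pLL[of 0 j] by (simp add: Lv_def)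
  have bpW: "blk_pos X.WW i = cpos y i - cpos y 0" for i
  proof (induct i rule: int_induct[where k=0])
    case base then show ?case by simp
  next
    case (step1 i) then show ?case using bp_succ[of X.WW i] WWv[of i] by simp
  next
    case (step2 i) then show ?case using bp_succ[of X.WW "i - 1"] WWv[of "i - 1"] by simp
  qed
  have bpH: "blk_pos X.HH j = rp y j - rp y 0" for j
  proof (induct j rule: int_induct[where k=0])
    case base then show ?case by simp
  next
    case (step1 j) then show ?case using bp_succ[of X.HH j] HHv[of j] by simp
  next
    case (step2 j) then show ?case using bp_succ[of X.HH "j - 1"] HHv[of "j - 1"] by simp
  qed
  have "y = shift (- cpos y 0, - rp y 0) (subst_cfg (omega n) x)"
  proof
    fix p :: "int \<times> int"
    obtain p1 p2 where p: "p = (p1, p2)" by fastforce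
    obtain i j d1 d2 where c: "p1 - cpos y 0 = blk_pos X.WW i + d1" "p2 - rp y 0 = blk_pos X.HH j + d2"
      "0 \<le> d1" "d1 \<le> pL n (BOTTOM (x (i, j)))" "0 \<le> d2" "d2 \<le> pL n (LEFT (x (i, j)))"
      by (rule X.cell_exists)
    have "shift (- cpos y 0, - rp y 0) (subst_cfg (omega n) x) p = subst_cfg (omega n) x (blk_pos X.WW i + d1, blk_pos X.HH j + d2)"
      using c p by (simp add: shift_def)
    also have "\<dots> = blk n (vk y i j) (vt y i j) (hK y i j) (hT y i j) d1 d2"
      using X.cell_eval[OF c(3-6)] bc by simp
    also have "\<dots> = y (cpos y i + d1, rp y j + d2)"
      using cell_y[of d1 i d2 j] c pLB pLL by simp
    also have "\<dots> = y p" using c p bpW bpH by simp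
    finally show "y p = shift (- cpos y 0, - rp y 0) (subst_cfg (omega n) x) p" by simp
  qed
  then show ?thesis using vx by blast
qed

end

lemma valid_shift: "valid T z \<Longrightarrow> valid T (shift k z)"
  unfolding valid_def shift_def by (auto simp: algebra_simps)

theorem theoremA:
  fixes n :: nat
  assumes "1 \<le> n"
  shows "\<exists>\<omega> :: tile \<Rightarrow> tile word2.
           is_morphism_on (Omega n) \<omega> \<and>
           (\<forall>x\<in>Omega n. subst_cfg \<omega> x \<in> Omega n) \<and>
           expansive (Omega n) \<omega> \<and>
           recognizable (Omega n) \<omega> \<and>
           Omega n = {shift k (subst_cfg \<omega> x) | k x. x \<in> Omega n}"
proof (intro exI[of _ "omega n"] conjI)
  have Om: "x \<in> Omega n \<longleftrightarrow> valid (TS False n) x" for x by (simp add: Omega_def Tset_TS)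
  show "is_morphism_on (Omega n) (omega n)"
    unfolding is_morphism_on_def
  proof (intro ballI allI)
    fix x a b assume "x \<in> Omega n"
    then interpret X: scfg n x using assms Om by unfold_locales auto
    show "snd (wsize (omega n (x (a, b)))) = snd (wsize (omega n (x (a + 1, b)))) \<and>
          fst (wsize (omega n (x (a, b)))) = fst (wsize (omega n (x (a, b + 1))))" by (rule X.morph)
  qed
  show "\<forall>x\<in>Omega n. subst_cfg (omega n) x \<in> Omega n"
  proof
    fix x assume "x \<in> Omega n"
    then interpret X: scfg n x using assms Om by unfold_locales auto
    show "subst_cfg (omega n) x \<in> Omega n" using X.subst_valid Om by simp
  qed
  show "expansive (Omega n) (omega n)" by (rule expansive_omega[OF assms])
  show "recognizable (Omega n) (omega n)"
    unfolding recognizable_def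
  proof (intro allI impI)
    fix y k x k' x'
    assume h: "x \<in> Omega n \<and> y = shift k (subst_cfg (omega n) x) \<and>
      0 \<le> fst k \<and> fst k < int (fst (wsize (omega n (x (0, 0))))) \<and>
      0 \<le> snd k \<and> snd k < int (snd (wsize (omega n (x (0, 0))))) \<and>
      x' \<in> Omega n \<and> y = shift k' (subst_cfg (omega n) x') \<and>
      0 \<le> fst k' \<and> fst k' < int (fst (wsize (omega n (x' (0, 0))))) \<and>
      0 \<le> snd k' \<and> snd k' < int (snd (wsize (omega n (x' (0, 0)))))"
    show "k = k' \<and> x = x'"
      by (rule recog_main[of n x x' k k']) (use h Om assms in auto)
  qed
  show "Omega n = {shift k (subst_cfg (omega n) x) | k x. x \<in> Omega n}"
  proof
    show "Omega n \<subseteq> {shift k (subst_cfg (omega n) x) | k x. x \<in> Omega n}"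
    proof
      fix y assume "y \<in> Omega n"
      then interpret Y: ycfg n y using assms Om by unfold_locales auto
      obtain k x where "valid (TS False n) x" "y = shift k (subst_cfg (omega n) x)" using Y.onto_y by blast
      then show "y \<in> {shift k (subst_cfg (omega n) x) | k x. x \<in> Omega n}" using Om by blast
    qed
    show "{shift k (subst_cfg (omega n) x) | k x. x \<in> Omega n} \<subseteq> Omega n"
    proof
      fix z assume "z \<in> {shift k (subst_cfg (omega n) x) | k x. x \<in> Omega n}"
      then obtain k x where z: "z = shift k (subst_cfg (omega n) x)" "x \<in> Omega n" by blast
      then interpret X: scfg n x using assms Om by unfold_locales auto
      show "z \<in> Omega n" using valid_shift[OF X.subst_valid] z Om by simp
    qed
  qed
qed

end
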